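(* Let $m=2^i$ with $i\ge 1$. The subspaces of $\mathbb{R}^m$ defined by the generator matrices in $\mathcal{C}_i$ (constructed below) form a set of $(m-1)(m+2)=2^{2i}+2^i-2$ distinct $\tfrac{m}{2}$-dimensional subspaces of $\mathbb{R}^m$, and the distance between any two distinct subspaces of this set is either $\sqrt{m/4}$ or $\sqrt{m/2}$.
   Context: A subspace $P$ of $\mathbb{R}^m$ of dimension $n$ is specified by a generator matrix, an $n\times m$ matrix whose rows span $P$; the same symbol is used for the subspace and its generator matrix, and $P^\perp$ denotes (a generator matrix of) the orthogonal complement of $P$ in the ambient space. $I$ denotes an identity matrix of the appropriate size, $0$ a zero matrix, and $+$, $-$ denote $+1$, $-1$. Distance: for two $n$-dimensional subspaces $P,Q$ of $\mathbb{R}^m$, the principal angles $\theta_1,\dots,\theta_n\in[0,\pi/2]$ are defined by $\cos\theta_k=\max_{u\in P}\max_{v\in Q} u\cdot v = u_k\cdot v_k$ for $k=1,\dots,n$, subject to $u\cdot u=v\cdot v=1$ and $u\cdot u_j=0$, $v\cdot v_j=0$ for $1\le j\le k-1$. The distance is $d(P,Q)=\sqrt{\sin^2\theta_1+\cdots+\sin^2\theta_n}$. Sets $\mathcal{Q}_i$ of $2^{i-1}\times 2^{i-1}$ matrices: $\mathcal{Q}_1=\{(+),(-)\}$, and for $i\ge 2$, $\mathcal{Q}_i=\left\{\begin{pmatrix}+&0\\0&+\end{pmatrix}\otimes Q,\ \begin{pmatrix}+&0\\0&-\end{pmatrix}\otimes Q,\ \begin{pmatrix}0&+\\+&0\end{pmatrix}\otimes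 Q,\ \begin{pmatrix}0&+\\-&0\end{pmatrix}\otimes Q \;:\; Q\in\mathcal{Q}_{i-1}\right\}$, where $\otimes$ is the Kronecker product. Sets $\mathcal{C}_i$ of $2^{i-1}\times 2^i$ generator matrices: $\mathcal{C}_1=\{(+\ 0),(0\ +),(+\ +),(+\ -)\}$ (four lines in $\mathbb{R}^2$), and for $i\ge2$, $\mathcal{C}_i=\left\{(I\ 0),\ (0\ I),\ \begin{pmatrix}P&0\\0&P\end{pmatrix},\ \begin{pmatrix}P&0\\0&P^\perp\end{pmatrix},\ (I\ Q)\;:\; P\in\mathcal{C}_{i-1},\ Q\in\mathcal{Q}_i\right\}$, where $I$ is the $2^{i-1}\times 2^{i-1}$ identity. Thus $(I\ 0)$ spans the first $2^{i-1}$ coordinate vectors of $\mathbb{R}^{2^i}$, $(0\ I)$ the last $2^{i-1}$, $\begin{pmatrix}P&0\\0&P\end{pmatrix}$ is $P\oplus P$ and $\begin{pmatrix}P&0\\0&P^\perp\end{pmatrix}$ is $P\oplus P^\perp$ (with $P,P^\perp\subset\mathbb{R}^{2^{i-1}}$), and $(I\ Q)$ is the row space of the $2^{i-1}\times 2^i$ matrix $[I\,|\,Q]$. *)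

theory Defs
  imports Complex_Main
begin

text \<open>Vectors of R^m are represented as functions nat => real vanishing at all
  coordinates >= m; matrices as functions nat => nat => real (row, column) with
  explicitly given sizes.\<close>

definition in_Rm :: "nat \<Rightarrow> (nat \<Rightarrow> real) \<Rightarrow> bool" where
  "in_Rm m v \<longleftrightarrow> (\<forall>j\<ge>m. v j = 0)"

definition dotp :: "nat \<Rightarrow> (nat \<Rightarrow> real) \<Rightarrow> (nat \<Rightarrow> real) \<Rightarrow> real" where
  "dotp m u v = (\<Sum>j<m. u j * v j)"

definition rowspace :: "nat \<Rightarrow> nat \<Rightarrow> (nat \<Rightarrow> nat \<Rightarrow> real) \<Rightarrow> (nat \<Rightarrow> real) set" where
  "rowspace n m A = {v. \<exists>c::nat \<Rightarrow> real. v = (\<lambda>j. if j < m then (\<Sum>k<n. c k * A k j) else 0)}"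

definition lin_indep :: "nat \<Rightarrow> nat \<Rightarrow> (nat \<Rightarrow> nat \<Rightarrow> real) \<Rightarrow> bool" where
  "lin_indep m k b \<longleftrightarrow> (\<forall>c::nat \<Rightarrow> real. (\<forall>j<m. (\<Sum>t<k. c t * b t j) = 0) \<longrightarrow> (\<forall>t<k. c t = 0))"

definition span_of :: "nat \<Rightarrow> (nat \<Rightarrow> nat \<Rightarrow> real) \<Rightarrow> (nat \<Rightarrow> real) set" where
  "span_of k b = {v. \<exists>c::nat \<Rightarrow> real. v = (\<lambda>j. \<Sum>t<k. c t * b t j)}"

definition has_dim :: "nat \<Rightarrow> (nat \<Rightarrow> real) set \<Rightarrow> nat \<Rightarrow> bool" where
  "has_dim m S k \<longleftrightarrow> (\<exists>b. (\<forall>t<k. in_Rm m (b t)) \<and> lin_indep m k b \<and> S = span_of k b)"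

definition perp :: "nat \<Rightarrow> (nat \<Rightarrow> real) set \<Rightarrow> (nat \<Rightarrow> real) set" where
  "perp h P = {y. in_Rm h y \<and> (\<forall>x\<in>P. dotp h x y = 0)}"

definition concat :: "nat \<Rightarrow> (nat \<Rightarrow> real) \<Rightarrow> (nat \<Rightarrow> real) \<Rightarrow> (nat \<Rightarrow> real)" where
  "concat h x y = (\<lambda>j. if j < h then x j else if j < 2*h then y (j - h) else 0)"

definition principal_vectors ::
  "nat \<Rightarrow> nat \<Rightarrow> (nat \<Rightarrow> real) set \<Rightarrow> (nat \<Rightarrow> real) set \<Rightarrow>
     (nat \<Rightarrow> nat \<Rightarrow> real) \<Rightarrow> (nat \<Rightarrow> nat \<Rightarrow> real) \<Rightarrow> bool" where
  "principal_vectors m n P Q u v \<longleftrightarrow>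
     (\<forall>k<n. u k \<in> P \<and> v k \<in> Q \<and> dotp m (u k) (u k) = 1 \<and> dotp m (v k) (v k) = 1
        \<and> (\<forall>j<k. dotp m (u k) (u j) = 0 \<and> dotp m (v k) (v j) = 0)
        \<and> (\<forall>x\<in>P. \<forall>y\<in>Q. dotp m x x = 1 \<and> dotp m y y = 1
              \<and> (\<forall>j<k. dotp m x (u j) = 0 \<and> dotp m y (v j) = 0)
              \<longrightarrow> dotp m x y \<le> dotp m (u k) (v k)))"

text \<open>cos theta_k = u_k . v_k, so sin^2 theta_k = 1 - (u_k . v_k)^2.\<close>
definition subspace_dist :: "nat \<Rightarrow> nat \<Rightarrow> (nat \<Rightarrow> real) set \<Rightarrow> (nat \<Rightarrow> real) set \<Rightarrow> real" where
  "subspace_dist m n P Q =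
     (SOME d. \<exists>u v. principal_vectors m n P Q u v
                 \<and> d = sqrt (\<Sum>k<n. 1 - (dotp m (u k) (v k))^2))"

definition kron2 :: "nat \<Rightarrow> (nat \<Rightarrow> nat \<Rightarrow> real) \<Rightarrow> (nat \<Rightarrow> nat \<Rightarrow> real) \<Rightarrow> (nat \<Rightarrow> nat \<Rightarrow> real)" where
  "kron2 h B Q = (\<lambda>r c. if r < 2*h \<and> c < 2*h then B (r div h) (c div h) * Q (r mod h) (c mod h) else 0)"

definition B_id :: "nat \<Rightarrow> nat \<Rightarrow> real" where
  "B_id a b = (if a = 0 \<and> b = 0 then 1 else if a = 1 \<and> b = 1 then 1 else 0)"
definition B_diag :: "nat \<Rightarrow> nat \<Rightarrow> real" where
  "B_diag a b = (if a = 0 \<and> b = 0 then 1 else if a = 1 \<and> b = 1 then -1 else 0)"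
definition B_swap :: "nat \<Rightarrow> nat \<Rightarrow> real" where
  "B_swap a b = (if a = 0 \<and> b = 1 then 1 else if a = 1 \<and> b = 0 then 1 else 0)"
definition B_rot :: "nat \<Rightarrow> nat \<Rightarrow> real" where
  "B_rot a b = (if a = 0 \<and> b = 1 then 1 else if a = 1 \<and> b = 0 then -1 else 0)"

fun Qs :: "nat \<Rightarrow> (nat \<Rightarrow> nat \<Rightarrow> real) set" where
  "Qs 0 = {}"
| "Qs (Suc 0) = {(\<lambda>r c. if r = 0 \<and> c = 0 then 1 else 0), (\<lambda>r c. if r = 0 \<and> c = 0 then -1 else 0)}"
| "Qs (Suc (Suc k)) =
     (\<Union>Q\<in>Qs (Suc k). {kron2 (2^k) B_id Q, kron2 (2^k) B_diag Q,
                          kron2 (2^k) B_swap Q, kron2 (2^k) B_rot Q})"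

definition IQ :: "nat \<Rightarrow> (nat \<Rightarrow> nat \<Rightarrow> real) \<Rightarrow> (nat \<Rightarrow> nat \<Rightarrow> real)" where
  "IQ h Q = (\<lambda>r c. if r < h \<and> c < h then (if r = c then 1 else 0)
                   else if r < h \<and> h \<le> c \<and> c < 2*h then Q r (c - h) else 0)"

definition row2 :: "real \<Rightarrow> real \<Rightarrow> (nat \<Rightarrow> nat \<Rightarrow> real)" where
  "row2 a b = (\<lambda>r c. if r = 0 \<and> c = 0 then a else if r = 0 \<and> c = 1 then b else 0)"

text \<open>Block generator matrices are rendered by the subspaces they span:
  (I 0), (0 I), P (+) P, P (+) P^perp, rowspace [I|Q].\<close>
fun Cs :: "nat \<Rightarrow> (nat \<Rightarrow> real) set set" where
  "Cs 0 = {}"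
| "Cs (Suc 0) = {rowspace 1 2 (row2 1 0), rowspace 1 2 (row2 0 1),
                 rowspace 1 2 (row2 1 1), rowspace 1 2 (row2 1 (-1))}"
| "Cs (Suc (Suc k)) =
     {{concat (2^(Suc k)) x (\<lambda>_. 0) | x. in_Rm (2^(Suc k)) x},
      {concat (2^(Suc k)) (\<lambda>_. 0) x | x. in_Rm (2^(Suc k)) x}}
     \<union> (\<Union>P\<in>Cs (Suc k). {{concat (2^(Suc k)) x y | x y. x \<in> P \<and> y \<in> P},
                          {concat (2^(Suc k)) x y | x y. x \<in> P \<and> y \<in> perp (2^(Suc k)) P}})
     \<union> (\<lambda>Q. rowspace (2^(Suc k)) (2^(Suc (Suc k))) (IQ (2^(Suc k)) Q)) ` Qs (Suc (Suc k))"

end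

theory Submission
  imports Defs "Jordan_Normal_Form.Determinant" "HOL-Analysis.Function_Topology"
begin
lemma sq_lemma:
  fixes C :: "nat \<Rightarrow> nat \<Rightarrow> real"
  assumes "\<And>j k. j < n \<Longrightarrow> k < n \<Longrightarrow> (\<Sum>s<n. C j s * C k s) = (if j = k then 1 else 0)"
  shows "\<And>s r. s < n \<Longrightarrow> r < n \<Longrightarrow> (\<Sum>j<n. C j s * C j r) = (if s = r then 1 else 0)"
proof -
  define A where "A = mat n n (\<lambda>(i,j). C i j)"
  have Ac: "A \<in> carrier_mat n n" unfolding A_def by simp
  have "A * transpose_mat A = 1\<^sub>m n"
  proof (rule eq_matI)
    fix i j assume ij: "i < dim_row (1\<^sub>m n :: real mat)" "j < dim_col (1\<^sub>m n :: real mat)"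
    then have "i < n" "j < n" by auto
    then show "(A * transpose_mat A) $$ (i, j) = 1\<^sub>m n $$ (i, j)"
      using assms[of i j] Ac
      by (simp add: A_def scalar_prod_def row_def col_def atLeast0LessThan)
  qed (auto simp: A_def)
  then have T: "transpose_mat A * A = 1\<^sub>m n"
    using mat_mult_left_right_inverse[OF Ac] Ac by auto
  fix s r assume sr: "s < n" "r < n"
  have "(transpose_mat A * A) $$ (s, r) = (\<Sum>j<n. C j s * C j r)"
    using sr Ac by (simp add: A_def scalar_prod_def row_def col_def atLeast0LessThan)
  then show "(\<Sum>j<n. C j s * C j r) = (if s = r then 1 else 0)"
    using T sr by simp
qed

definition ONF :: "nat \<Rightarrow> nat \<Rightarrow> (nat \<Rightarrow> nat \<Rightarrow> real) \<Rightarrow> bool" where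
  "ONF m n a \<longleftrightarrow> (\<forall>t<n. in_Rm m (a t)) \<and>
     (\<forall>s<n. \<forall>t<n. dotp m (a s) (a t) = (if s = t then 1 else 0))"

definition lc :: "nat \<Rightarrow> (nat \<Rightarrow> real) \<Rightarrow> (nat \<Rightarrow> nat \<Rightarrow> real) \<Rightarrow> nat \<Rightarrow> real" where
  "lc n c a = (\<lambda>j. \<Sum>t<n. c t * a t j)"

definition FF :: "nat \<Rightarrow> nat \<Rightarrow> (nat \<Rightarrow> nat \<Rightarrow> real) \<Rightarrow> nat \<Rightarrow> (nat \<Rightarrow> nat \<Rightarrow> real) \<Rightarrow> real" where
  "FF m n a k b = (\<Sum>s<n. \<Sum>t<k. (dotp m (a s) (b t))^2)"

lemma span_of_lc: "span_of n a = range (\<lambda>c. lc n c a)"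
  unfolding span_of_def lc_def by auto

lemma in_span: "lc n c a \<in> span_of n a"
  unfolding span_of_lc by auto

lemma dotp_comm: "dotp m x y = dotp m y x"
  unfolding dotp_def by (simp add: mult.commute)

lemma dotp_lc_left: "dotp m (lc n c a) y = (\<Sum>t<n. c t * dotp m (a t) y)"
  unfolding dotp_def lc_def
  by (simp add: sum_distrib_left sum_distrib_right sum.swap[of _ "{..<n}"] mult.assoc mult.left_commute)

lemma dotp_lc_right: "dotp m y (lc n c a) = (\<Sum>t<n. c t * dotp m y (a t))"
  using dotp_lc_left[of m n c a y] by (simp add: dotp_comm)

lemma dotp_add_left: "dotp m (\<lambda>j. x j + y j) z = dotp m x z + dotp m y z"
  unfolding dotp_def by (simp add: sum.distrib algebra_simps)
lemma dotp_diff_left: "dotp m (\<lambda>j. x j - y j) z = dotp m x z - dotp m y z"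
  unfolding dotp_def by (simp add: sum_subtractf algebra_simps)
lemma dotp_scale_left: "dotp m (\<lambda>j. r * x j) z = r * dotp m x z"
  unfolding dotp_def by (simp add: sum_distrib_left algebra_simps)
lemma dotp_add_right: "dotp m z (\<lambda>j. x j + y j) = dotp m z x + dotp m z y"
  unfolding dotp_def by (simp add: sum.distrib algebra_simps)
lemma dotp_diff_right: "dotp m z (\<lambda>j. x j - y j) = dotp m z x - dotp m z y"
  unfolding dotp_def by (simp add: sum_subtractf algebra_simps)
lemma dotp_scale_right: "dotp m z (\<lambda>j. r * x j) = r * dotp m z x"
  unfolding dotp_def by (simp add: sum_distrib_left algebra_simps)

lemma dotp_self_nonneg: "dotp m x x \<ge> 0"
  unfolding dotp_def by (simp add: sum_nonneg)

lemma dotp_self_zero: "dotp m x x = 0 \<Longrightarrow> j < m \<Longrightarrow> x j = 0"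
  unfolding dotp_def
  using sum_nonneg_eq_0_iff[of "{..<m}" "\<lambda>j. x j * x j"] by auto

lemma in_Rm_eqI: "in_Rm m x \<Longrightarrow> in_Rm m y \<Longrightarrow> (\<And>j. j < m \<Longrightarrow> x j = y j) \<Longrightarrow> x = y"
  unfolding in_Rm_def by (metis not_le ext)

lemma in_Rm_lc: "(\<And>t. t < n \<Longrightarrow> in_Rm m (a t)) \<Longrightarrow> in_Rm m (lc n c a)"
  unfolding in_Rm_def lc_def by auto

lemma ONF_dotp_lc: assumes "ONF m n a" "s < n"
  shows "dotp m (lc n c a) (a s) = c s"
proof -
  have "dotp m (lc n c a) (a s) = (\<Sum>t<n. c t * (if t = s then 1 else 0))"
    unfolding dotp_lc_left using assms unfolding ONF_def by (intro sum.cong) auto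
  also have "\<dots> = c s" using assms(2) by (simp add: if_distrib cong: if_cong)
  finally show ?thesis .
qed

lemma ONF_dotp_lc_lc: assumes "ONF m n a"
  shows "dotp m (lc n c a) (lc n d a) = (\<Sum>t<n. c t * d t)"
  unfolding dotp_lc_right using ONF_dotp_lc[OF assms] by (simp add: dotp_comm mult.commute)

lemma span_rep: assumes "ONF m n a" "x \<in> span_of n a"
  shows "x = lc n (\<lambda>s. dotp m x (a s)) a"
proof -
  obtain c where x: "x = lc n c a" using assms(2) unfolding span_of_lc by auto
  have "lc n (\<lambda>s. dotp m x (a s)) a = lc n c a"
    unfolding lc_def using ONF_dotp_lc[OF assms(1)] x by (auto intro!: sum.cong)
  then show ?thesis using x by simp
qed

lemma span_in_Rm: "ONF m n a \<Longrightarrow> x \<in> span_of n a \<Longrightarrow> in_Rm m x"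
  unfolding span_of_lc ONF_def using in_Rm_lc by auto

lemma lc_add: "(\<lambda>j. lc n c a j + lc n d a j) = lc n (\<lambda>t. c t + d t) a"
  unfolding lc_def by (simp add: sum.distrib distrib_right)
lemma lc_diff: "(\<lambda>j. lc n c a j - lc n d a j) = lc n (\<lambda>t. c t - d t) a"
  unfolding lc_def by (simp add: sum_subtractf left_diff_distrib)
lemma lc_scale: "(\<lambda>j. r * lc n c a j) = lc n (\<lambda>t. r * c t) a"
  unfolding lc_def by (simp add: sum_distrib_left mult.assoc)

lemma span_add: "x \<in> span_of n a \<Longrightarrow> y \<in> span_of n a \<Longrightarrow> (\<lambda>j. x j + y j) \<in> span_of n a"
proof -
  assume "x \<in> span_of n a" "y \<in> span_of n a"
  then obtain c d where "x = lc n c a" "y = lc n d a" unfolding span_of_lc by auto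
  then have "(\<lambda>j. x j + y j) = lc n (\<lambda>t. c t + d t) a" using lc_add by metis
  then show ?thesis using in_span by metis
qed
lemma span_diff: "x \<in> span_of n a \<Longrightarrow> y \<in> span_of n a \<Longrightarrow> (\<lambda>j. x j - y j) \<in> span_of n a"
proof -
  assume "x \<in> span_of n a" "y \<in> span_of n a"
  then obtain c d where "x = lc n c a" "y = lc n d a" unfolding span_of_lc by auto
  then have "(\<lambda>j. x j - y j) = lc n (\<lambda>t. c t - d t) a" using lc_diff by metis
  then show ?thesis using in_span by metis
qed
lemma span_scale: "x \<in> span_of n a \<Longrightarrow> (\<lambda>j. r * x j) \<in> span_of n a"
proof -
  assume "x \<in> span_of n a"
  then obtain c where "x = lc n c a" unfolding span_of_lc by auto
  then have "(\<lambda>j. r * x j) = lc n (\<lambda>t. r * c t) a" using lc_scale by metis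
  then show ?thesis using in_span by metis
qed
lemma span_basis: "t < n \<Longrightarrow> a t \<in> span_of n a"
proof -
  assume t: "t < n"
  have "lc n (\<lambda>s. if s = t then 1 else 0) a = a t"
  proof
    fix j
    have "(\<Sum>s<n. (if s = t then 1 else 0) * a s j) = (\<Sum>s<n. if s = t then a s j else 0)"
      by (rule sum.cong) auto
    then show "lc n (\<lambda>s. if s = t then 1 else 0) a j = a t j" unfolding lc_def using t by simp
  qed
  then show ?thesis using in_span by metis
qed

lemma span_lc_closed: assumes "\<And>t. t < k \<Longrightarrow> b t \<in> span_of n a"
  shows "lc k c b \<in> span_of n a"
  using assms
proof (induction k)
  case 0
  have "lc 0 c b = lc n (\<lambda>_. 0) a" unfolding lc_def by auto
  then show ?case using in_span by metis
next
  case (Suc k)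
  have "lc (Suc k) c b = (\<lambda>j. lc k c b j + c k * b k j)" unfolding lc_def by auto
  moreover have "lc k c b \<in> span_of n a" using Suc by auto
  moreover have "(\<lambda>j. c k * b k j) \<in> span_of n a" using Suc.prems span_scale by auto
  ultimately show ?case using span_add by metis
qed

lemma span_subset: "(\<And>t. t < k \<Longrightarrow> b t \<in> span_of n a) \<Longrightarrow> span_of k b \<subseteq> span_of n a"
  using span_lc_closed unfolding span_of_lc by blast

lemma proj_prop: assumes "ONF m n a" "x \<in> span_of n a"
  shows "dotp m (lc n (\<lambda>s. dotp m (a s) y) a) x = dotp m y x"
proof -
  obtain c where x: "x = lc n c a" using assms(2) unfolding span_of_lc by auto
  show ?thesis unfolding x dotp_lc_right
  proof (intro sum.cong refl)
    fix t assume "t \<in> {..<n}"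
    then have "dotp m (lc n (\<lambda>s. dotp m (a s) y) a) (a t) = dotp m (a t) y"
      using ONF_dotp_lc[OF assms(1)] by simp
    then show "c t * dotp m (lc n (\<lambda>s. dotp m (a s) y) a) (a t) = c t * dotp m y (a t)"
      using dotp_comm[of m "a t" y] by simp
  qed
qed

lemma proj_indep: assumes "ONF m n a" "ONF m k b" "span_of n a = span_of k b"
  shows "(\<Sum>s<n. (dotp m (a s) y)^2) = (\<Sum>t<k. (dotp m (b t) y)^2)"
proof -
  define p where "p = lc n (\<lambda>s. dotp m (a s) y) a"
  define q where "q = lc k (\<lambda>t. dotp m (b t) y) b"
  have pa: "p \<in> span_of k b" using assms(3) in_span unfolding p_def by metis
  have qa: "q \<in> span_of n a" using assms(3) in_span unfolding q_def by metis
  have "dotp m q p = dotp m y p" unfolding q_def using proj_prop[OF assms(2) pa] .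
  also have "dotp m y p = (\<Sum>s<n. (dotp m (a s) y)^2)"
    unfolding p_def dotp_lc_right by (simp add: power2_eq_square dotp_comm)
  finally have 1: "dotp m q p = (\<Sum>s<n. (dotp m (a s) y)^2)" .
  have "dotp m p q = dotp m y q" unfolding p_def using proj_prop[OF assms(1) qa] .
  also have "dotp m y q = (\<Sum>t<k. (dotp m (b t) y)^2)"
    unfolding q_def dotp_lc_right by (simp add: power2_eq_square dotp_comm)
  finally have 2: "dotp m p q = (\<Sum>t<k. (dotp m (b t) y)^2)" .
  show ?thesis using 1 2 dotp_comm by metis
qed

lemma FF_indep_left: assumes "ONF m n a" "ONF m n' a'" "span_of n a = span_of n' a'"
  shows "FF m n a k b = FF m n' a' k b"
proof -
  have "FF m n a k b = (\<Sum>t<k. \<Sum>s<n. (dotp m (a s) (b t))^2)"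
    unfolding FF_def by (rule sum.swap)
  also have "\<dots> = (\<Sum>t<k. \<Sum>s<n'. (dotp m (a' s) (b t))^2)"
    using proj_indep[OF assms] by simp
  also have "\<dots> = FF m n' a' k b"
    unfolding FF_def by (rule sum.swap[symmetric])
  finally show ?thesis .
qed

lemma FF_sym: "FF m n a k b = FF m k b n a"
  unfolding FF_def by (simp add: sum.swap[of _ "{..<n}"] dotp_comm)

lemma FF_indep: assumes "ONF m n a" "ONF m n' a'" "span_of n a = span_of n' a'"
  "ONF m k b" "ONF m k' b'" "span_of k b = span_of k' b'"
  shows "FF m n a k b = FF m n' a' k' b'"
  using FF_indep_left[OF assms(1-3)] FF_indep_left[OF assms(4-6)] FF_sym by metis

lemma sum_if_lt:
  fixes f :: "nat \<Rightarrow> real"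
  assumes "k \<le> n" shows "(\<Sum>j<n. if j < k then f j else 0) = (\<Sum>j<k. f j)"
proof -
  have "(\<Sum>j<n. if j < k then f j else 0) = (\<Sum>j<k. if j < k then f j else 0)"
    using assms by (intro sum.mono_neutral_right) auto
  also have "\<dots> = (\<Sum>j<k. f j)" by (intro sum.cong) auto
  finally show ?thesis .
qed

lemma delta_sum: fixes f :: "nat \<Rightarrow> real"
  assumes "s < n" shows "(\<Sum>r<n. (if s = r then 1 else 0) * f r) = f s"
proof -
  have "(\<Sum>r<n. (if s = r then 1 else 0) * f r) = (\<Sum>r<n. if r = s then f r else 0)"
    by (intro sum.cong) auto
  then show ?thesis using assms by simp
qed

lemma KL: assumes a: "ONF m n a" and w: "ONF m n w" and ws: "\<And>j. j < n \<Longrightarrow> w j \<in> span_of n a"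
  shows "span_of n a = span_of n w"
proof
  show "span_of n w \<subseteq> span_of n a" using span_subset ws by blast
  define C where "C j s = dotp m (w j) (a s)" for j s
  have wrep: "w j = lc n (C j) a" if "j < n" for j
    unfolding C_def using span_rep[OF a ws[OF that]] .
  have orth: "(\<Sum>s<n. C j s * C k s) = (if j = k then 1 else 0)" if "j < n" "k < n" for j k
  proof -
    have "dotp m (w j) (w k) = (\<Sum>s<n. C j s * C k s)"
      using wrep[OF that(1)] wrep[OF that(2)] ONF_dotp_lc_lc[OF a] by metis
    then show ?thesis using w that unfolding ONF_def by auto
  qed
  have orth2: "(\<Sum>j<n. C j s * C j r) = (if s = r then 1 else 0)" if "s < n" "r < n" for s r
    using sq_lemma[of n C, OF orth] that by blast
  have arep: "a s = lc n (\<lambda>j. C j s) w" if s: "s < n" for s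
  proof
    fix i
    have "lc n (\<lambda>j. C j s) w i = (\<Sum>j<n. C j s * (\<Sum>r<n. C j r * a r i))"
      unfolding lc_def using wrep by (intro sum.cong) (auto simp: lc_def)
    also have "\<dots> = (\<Sum>j<n. \<Sum>r<n. C j s * C j r * a r i)"
      by (simp add: sum_distrib_left mult.assoc)
    also have "\<dots> = (\<Sum>r<n. \<Sum>j<n. C j s * C j r * a r i)"
      by (rule sum.swap)
    also have "\<dots> = (\<Sum>r<n. (\<Sum>j<n. C j s * C j r) * a r i)"
      by (simp add: sum_distrib_right)
    also have "\<dots> = (\<Sum>r<n. (if s = r then 1 else 0) * a r i)"
      using orth2[OF s] by (intro sum.cong) auto
    also have "\<dots> = a s i" using delta_sum[OF s] by simp
    finally show "a s i = lc n (\<lambda>j. C j s) w i" by simp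
  qed
  show "span_of n a \<subseteq> span_of n w"
    using span_subset[of n a n w] arep in_span by metis
qed

lemma ONF_in_span: "ONF m n a \<Longrightarrow> x \<in> span_of n a \<Longrightarrow> in_Rm m x"
  using span_in_Rm by blast

lemma deficiency:
  assumes a: "ONF m n a" and u: "ONF m k u" and kn: "k < n"
    and us: "\<And>j. j < k \<Longrightarrow> u j \<in> span_of n a"
  shows "\<exists>x\<in>span_of n a. dotp m x x = 1 \<and> (\<forall>j<k. dotp m x (u j) = 0)"
proof (rule ccontr)
  assume H: "\<not> ?thesis"
  define C where "C s j = dotp m (a s) (u j)" for s j
  define r where "r s = (\<lambda>i. a s i - lc k (C s) u i)" for s
  have rspan: "r s \<in> span_of n a" if "s < n" for s
    unfolding r_def using span_diff[OF span_basis[OF that] span_lc_closed[OF us]] .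
  have rorth: "dotp m (r s) (u j) = 0" if "j < k" for s j
    unfolding r_def dotp_diff_left using ONF_dotp_lc[OF u that] C_def by simp
  have r0: "dotp m (r s) (r s) = 0" if s: "s < n" for s
  proof (rule ccontr)
    assume "dotp m (r s) (r s) \<noteq> 0"
    then have q: "dotp m (r s) (r s) > 0" using dotp_self_nonneg[of m "r s"] by linarith
    define x where "x = (\<lambda>i. (1 / sqrt (dotp m (r s) (r s))) * r s i)"
    have "x \<in> span_of n a" unfolding x_def using span_scale[OF rspan[OF s]] .
    moreover have "dotp m x x = 1" unfolding x_def dotp_scale_left dotp_scale_right
      using q by (simp add: real_sqrt_mult[symmetric])
    moreover have "\<forall>j<k. dotp m x (u j) = 0" unfolding x_def dotp_scale_left using rorth by simp
    ultimately show False using H by blast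
  qed
  have arep: "a s = lc k (C s) u" if s: "s < n" for s
  proof (rule in_Rm_eqI)
    show "in_Rm m (a s)" using a s unfolding ONF_def by auto
    show "in_Rm m (lc k (C s) u)" using u unfolding ONF_def by (intro in_Rm_lc) auto
    fix i assume "i < m"
    then have "r s i = 0" using dotp_self_zero[OF r0[OF s]] by simp
    then show "a s i = lc k (C s) u i" unfolding r_def by simp
  qed
  define D where "D s j = (if j < k then C s j else 0)" for s j
  have "(\<Sum>j<n. D s j * D t j) = (if s = t then 1 else 0)" if "s < n" "t < n" for s t
  proof -
    have "(\<Sum>j<n. D s j * D t j) = (\<Sum>j<n. if j < k then C s j * C t j else 0)"
      unfolding D_def by (intro sum.cong) auto
    also have "\<dots> = (\<Sum>j<k. C s j * C t j)" using sum_if_lt kn by simp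
    also have "\<dots> = dotp m (a s) (a t)"
      using arep[OF that(1)] arep[OF that(2)] ONF_dotp_lc_lc[OF u] by metis
    also have "\<dots> = (if s = t then 1 else 0)" using a that unfolding ONF_def by auto
    finally show ?thesis .
  qed
  then have "(\<Sum>s<n. D s (n - 1) * D s (n - 1)) = 1"
    using sq_lemma[of n D] kn by simp
  moreover have "\<not> (n - 1 < k)" using kn by simp
  then have "(\<Sum>s<n. D s (n - 1) * D s (n - 1)) = 0" unfolding D_def by simp
  ultimately show False by simp
qed

lemma ONF_lin_indep: assumes a: "ONF m n a" shows "lin_indep m n a"
  unfolding lin_indep_def
proof (intro allI impI)
  fix c t assume H: "\<forall>j<m. (\<Sum>t<n. c t * a t j) = 0" and t: "t < n"
  have "dotp m (lc n c a) (a t) = 0" unfolding dotp_def lc_def using H by simp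
  then show "c t = 0" using ONF_dotp_lc[OF a t] by simp
qed

lemma ONF_has_dim: "ONF m n a \<Longrightarrow> S = span_of n a \<Longrightarrow> has_dim m S n"
  unfolding has_dim_def using ONF_lin_indep by (auto simp: ONF_def)

lemma cont_coord [continuous_intros]:
  fixes f :: "'a::topological_space \<Rightarrow> 'b \<Rightarrow> 'c::topological_space"
  shows "continuous_on S f \<Longrightarrow> continuous_on S (\<lambda>x. f x i)"
  by (rule continuous_on_product_then_coordinatewise)

lemma compact_box: "compact {c::nat\<Rightarrow>real. \<forall>t. c t \<in> {-1..1}}"
proof -
  have "compactin (product_topology (\<lambda>_. euclidean) UNIV) (PiE UNIV (\<lambda>_::nat. {-1..1::real}))"
    by (simp add: compactin_PiE)
  moreover have "PiE UNIV (\<lambda>_::nat. {-1..1::real}) = {c::nat\<Rightarrow>real. \<forall>t. c t \<in> {-1..1}}"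
    by (auto simp: PiE_UNIV_domain Pi_def)
  ultimately show ?thesis by (simp add: euclidean_product_topology)
qed

definition KS :: "nat \<Rightarrow> nat \<Rightarrow> (nat \<Rightarrow> nat \<Rightarrow> real) \<Rightarrow> nat \<Rightarrow> (nat \<Rightarrow> nat \<Rightarrow> real) \<Rightarrow> (nat \<Rightarrow> real) set" where
  "KS m n a K U = {c. (\<forall>t. c t \<in> {-1..1}) \<and> (\<forall>t. n \<le> t \<longrightarrow> c t = 0) \<and>
      (\<Sum>t<n. (c t)^2) = 1 \<and> (\<forall>j. j < K \<longrightarrow> (\<Sum>t<n. c t * dotp m (a t) (U j)) = 0)}"

lemma compact_KS: "compact (KS m n a K U)"
proof -
  have "KS m n a K U = {c::nat\<Rightarrow>real. \<forall>t. c t \<in> {-1..1}} \<inter>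
     {c. (\<forall>t. n \<le> t \<longrightarrow> c t = 0) \<and>
      (\<Sum>t<n. (c t)^2) = 1 \<and> (\<forall>j. j < K \<longrightarrow> (\<Sum>t<n. c t * dotp m (a t) (U j)) = 0)}"
    unfolding KS_def by auto
  moreover have "closed {c::nat\<Rightarrow>real. (\<forall>t. n \<le> t \<longrightarrow> c t = 0) \<and>
      (\<Sum>t<n. (c t)^2) = 1 \<and> (\<forall>j. j < K \<longrightarrow> (\<Sum>t<n. c t * dotp m (a t) (U j)) = 0)}"
    by (intro closed_Collect_conj closed_Collect_all closed_Collect_imp open_Collect_const
          closed_Collect_eq continuous_intros)
  ultimately show ?thesis using compact_box by auto
qed

lemma X_image: assumes a: "ONF m n a"
  shows "{x \<in> span_of n a. dotp m x x = 1 \<and> (\<forall>j<K. dotp m x (U j) = 0)} = (\<lambda>c. lc n c a) ` KS m n a K U"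
proof
  show "(\<lambda>c. lc n c a) ` KS m n a K U \<subseteq> {x \<in> span_of n a. dotp m x x = 1 \<and> (\<forall>j<K. dotp m x (U j) = 0)}"
  proof
    fix x assume "x \<in> (\<lambda>c. lc n c a) ` KS m n a K U"
    then obtain c where c: "c \<in> KS m n a K U" and xe: "x = lc n c a" by auto
    have 1: "x \<in> span_of n a" unfolding xe by (rule in_span)
    have 2: "dotp m x x = 1" using c unfolding xe ONF_dotp_lc_lc[OF a] KS_def
      by (simp add: power2_eq_square)
    have 3: "dotp m x (U j) = 0" if "j < K" for j
      using c that unfolding xe dotp_lc_left KS_def by simp
    show "x \<in> {x \<in> span_of n a. dotp m x x = 1 \<and> (\<forall>j<K. dotp m x (U j) = 0)}"
      using 1 2 3 by auto
  qed
  show "{x \<in> span_of n a. dotp m x x = 1 \<and> (\<forall>j<K. dotp m x (U j) = 0)} \<subseteq> (\<lambda>c. lc n c a) ` KS m n a K U"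
  proof
    fix x assume "x \<in> {x \<in> span_of n a. dotp m x x = 1 \<and> (\<forall>j<K. dotp m x (U j) = 0)}"
    then have x: "x \<in> span_of n a" "dotp m x x = 1" "\<forall>j<K. dotp m x (U j) = 0" by auto
    define c where "c t = (if t < n then dotp m x (a t) else 0)" for t
    have xe: "x = lc n c a" using span_rep[OF a x(1)] unfolding c_def lc_def by simp
    have sq: "(\<Sum>t<n. (c t)^2) = 1" using x(2) unfolding xe ONF_dotp_lc_lc[OF a] by (simp add: power2_eq_square)
    have csq: "(c t)^2 \<le> 1" for t
    proof (cases "t < n")
      case True
      then have "(c t)^2 \<le> (\<Sum>t<n. (c t)^2)" by (intro member_le_sum) auto
      then show ?thesis using sq by simp
    qed (simp add: c_def)
    have "c t \<in> {-1..1}" for t using abs_square_le_1[of "c t"] csq[of t] by auto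
    moreover have "(\<Sum>t<n. c t * dotp m (a t) (U j)) = 0" if "j < K" for j
      using x(3) that unfolding xe dotp_lc_left by simp
    ultimately have "c \<in> KS m n a K U" unfolding KS_def using sq by (auto simp: c_def)
    then show "x \<in> (\<lambda>c. lc n c a) ` KS m n a K U" using xe by auto
  qed
qed

lemma max_exists:
  fixes K1 K2 :: nat
  assumes a: "ONF m n a" and b: "ONF m n b"
    and X: "X = {x \<in> span_of n a. dotp m x x = 1 \<and> (\<forall>j<K1. dotp m x (U j) = 0)}" "X \<noteq> {}"
    and Y: "Y = {y \<in> span_of n b. dotp m y y = 1 \<and> (\<forall>j<K2. dotp m y (V j) = 0)}" "Y \<noteq> {}"
  shows "\<exists>x\<in>X. \<exists>y\<in>Y. \<forall>x'\<in>X. \<forall>y'\<in>Y. dotp m x' y' \<le> dotp m x y"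
proof -
  define S where "S = KS m n a K1 U \<times> KS m n b K2 V"
  have XI: "X = (\<lambda>c. lc n c a) ` KS m n a K1 U" using X_image[OF a] X(1) by simp
  have YI: "Y = (\<lambda>c. lc n c b) ` KS m n b K2 V" using X_image[OF b] Y(1) by simp
  have cS: "compact S" unfolding S_def by (intro compact_Times compact_KS)
  have neS: "S \<noteq> {}" unfolding S_def using XI YI X(2) Y(2) by auto
  define phi where "phi p = (\<Sum>s<n. fst p s * (\<Sum>t<n. snd p t * dotp m (a s) (b t)))" for p :: "(nat \<Rightarrow> real) \<times> (nat \<Rightarrow> real)"
  have phi: "phi p = dotp m (lc n (fst p) a) (lc n (snd p) b)" for p
  proof -
    have "dotp m (lc n (fst p) a) (lc n (snd p) b) = (\<Sum>s<n. fst p s * dotp m (a s) (lc n (snd p) b))"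
      by (rule dotp_lc_left)
    also have "\<dots> = phi p" unfolding phi_def dotp_lc_right by simp
    finally show ?thesis by simp
  qed
  have "continuous_on S phi" unfolding phi_def by (intro continuous_intros)
  from continuous_attains_sup[OF cS neS this] obtain p where p: "p \<in> S" "\<forall>q\<in>S. phi q \<le> phi p" by blast
  show ?thesis
  proof (intro bexI ballI)
    show "lc n (fst p) a \<in> X" using p(1) XI unfolding S_def by auto
    show "lc n (snd p) b \<in> Y" using p(1) YI unfolding S_def by auto
    fix x' y' assume "x' \<in> X" "y' \<in> Y"
    then obtain c d where "c \<in> KS m n a K1 U" "d \<in> KS m n b K2 V" "x' = lc n c a" "y' = lc n d b"
      using XI YI by auto
    then show "dotp m x' y' \<le> dotp m (lc n (fst p) a) (lc n (snd p) b)"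
      using p(2)[rule_format, of "(c, d)"] unfolding S_def phi by auto
  qed
qed

lemma pv_ONF:
  assumes pv: "principal_vectors m N P Q u v" and P: "\<forall>x\<in>P. in_Rm m x" and Q: "\<forall>x\<in>Q. in_Rm m x"
  shows "ONF m N u" "ONF m N v"
proof -
  have h: "\<And>k. k < N \<Longrightarrow> u k \<in> P \<and> v k \<in> Q \<and> dotp m (u k) (u k) = 1 \<and> dotp m (v k) (v k) = 1
        \<and> (\<forall>j<k. dotp m (u k) (u j) = 0 \<and> dotp m (v k) (v j) = 0)"
    using pv unfolding principal_vectors_def by blast
  show "ONF m N u" unfolding ONF_def
  proof (intro conjI allI impI)
    fix t assume "t < N" then show "in_Rm m (u t)" using h P by blast
  next
    fix s t assume st: "s < N" "t < N"
    show "dotp m (u s) (u t) = (if s = t then 1 else 0)"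
    proof (cases s t rule: linorder_cases)
      case less then show ?thesis using h[OF st(2)] dotp_comm by metis
    next
      case equal then show ?thesis using h[OF st(2)] by simp
    next
      case greater then show ?thesis using h[OF st(1)] by metis
    qed
  qed
  show "ONF m N v" unfolding ONF_def
  proof (intro conjI allI impI)
    fix t assume "t < N" then show "in_Rm m (v t)" using h Q by blast
  next
    fix s t assume st: "s < N" "t < N"
    show "dotp m (v s) (v t) = (if s = t then 1 else 0)"
    proof (cases s t rule: linorder_cases)
      case less then show ?thesis using h[OF st(2)] dotp_comm by metis
    next
      case equal then show ?thesis using h[OF st(2)] by simp
    next
      case greater then show ?thesis using h[OF st(1)] by metis
    qed
  qed
qed

lemma pv_exists:
  assumes a: "ONF m n a" and P: "P = span_of n a" and b: "ONF m n b" and Q: "Q = span_of n b"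
  shows "N \<le> n \<Longrightarrow> \<exists>u v. principal_vectors m N P Q u v"
proof (induction N)
  case 0
  show ?case unfolding principal_vectors_def by simp
next
  case (Suc N)
  then obtain u v where pv: "principal_vectors m N P Q u v" by auto
  have PR: "\<forall>x\<in>P. in_Rm m x" "\<forall>x\<in>Q. in_Rm m x" using P Q span_in_Rm a b by blast+
  have h: "\<And>k. k < N \<Longrightarrow> u k \<in> P \<and> v k \<in> Q" using pv unfolding principal_vectors_def by blast
  define X where "X = {x \<in> span_of n a. dotp m x x = 1 \<and> (\<forall>j<N. dotp m x (u j) = 0)}"
  define Y where "Y = {y \<in> span_of n b. dotp m y y = 1 \<and> (\<forall>j<N. dotp m y (v j) = 0)}"
  have "X \<noteq> {}" unfolding X_def
    using deficiency[OF a pv_ONF(1)[OF pv PR] _ ] Suc.prems h P by auto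
  moreover have "Y \<noteq> {}" unfolding Y_def
    using deficiency[OF b pv_ONF(2)[OF pv PR] _ ] Suc.prems h Q by auto
  ultimately obtain x y where xy: "x \<in> X" "y \<in> Y" "\<forall>x'\<in>X. \<forall>y'\<in>Y. dotp m x' y' \<le> dotp m x y"
    using max_exists[OF a b X_def _ Y_def] by blast
  define u' where "u' = u(N := x)"
  define v' where "v' = v(N := y)"
  have "principal_vectors m (Suc N) P Q u' v'"
    unfolding principal_vectors_def
  proof (intro allI impI)
    fix k assume k: "k < Suc N"
    show "u' k \<in> P \<and> v' k \<in> Q \<and> dotp m (u' k) (u' k) = 1 \<and> dotp m (v' k) (v' k) = 1
        \<and> (\<forall>j<k. dotp m (u' k) (u' j) = 0 \<and> dotp m (v' k) (v' j) = 0)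
        \<and> (\<forall>x\<in>P. \<forall>y\<in>Q. dotp m x x = 1 \<and> dotp m y y = 1
              \<and> (\<forall>j<k. dotp m x (u' j) = 0 \<and> dotp m y (v' j) = 0)
              \<longrightarrow> dotp m x y \<le> dotp m (u' k) (v' k))"
    proof (cases "k < N")
      case True
      have eq: "\<And>j. j \<le> k \<Longrightarrow> u' j = u j \<and> v' j = v j" using True unfolding u'_def v'_def by auto
      have "u k \<in> P \<and> v k \<in> Q \<and> dotp m (u k) (u k) = 1 \<and> dotp m (v k) (v k) = 1
        \<and> (\<forall>j<k. dotp m (u k) (u j) = 0 \<and> dotp m (v k) (v j) = 0)
        \<and> (\<forall>x\<in>P. \<forall>y\<in>Q. dotp m x x = 1 \<and> dotp m y y = 1
              \<and> (\<forall>j<k. dotp m x (u j) = 0 \<and> dotp m y (v j) = 0)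
              \<longrightarrow> dotp m x y \<le> dotp m (u k) (v k))"
        using pv True unfolding principal_vectors_def by blast
      then show ?thesis using eq by simp
    next
      case False
      then have kN: "k = N" using k by simp
      have eq: "\<And>j. j < N \<Longrightarrow> u' j = u j \<and> v' j = v j" unfolding u'_def v'_def by auto
      have "u' N = x" "v' N = y" unfolding u'_def v'_def by auto
      then show ?thesis using xy eq unfolding kN X_def Y_def P Q by auto
    qed
  qed
  then show ?case by blast
qed

lemma max_lemma:
  fixes al be :: real
  assumes H: "\<And>p q. p^2 + q^2 = 1 \<Longrightarrow> p * al + q * be \<le> al"
  shows "be = 0"
proof (rule ccontr)
  assume be: "be \<noteq> 0"
  define r where "r = sqrt (al^2 + be^2)"
  have pos: "al^2 + be^2 > 0" using be by (simp add: add_nonneg_pos)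
  then have r: "r > 0" "r^2 = al^2 + be^2" unfolding r_def by auto
  have "(al / r)^2 + (be / r)^2 = (al^2 + be^2) / r^2" by (simp add: power_divide add_divide_distrib)
  also have "\<dots> = 1" using r(1) by (simp add: r(2)[symmetric])
  finally have "(al / r)^2 + (be / r)^2 = 1" .
  then have "(al / r) * al + (be / r) * be \<le> al" by (rule H)
  moreover have "(al / r) * al + (be / r) * be = r"
  proof -
    have "(al / r) * al + (be / r) * be = (al^2 + be^2) / r" by (simp add: power2_eq_square add_divide_distrib)
    also have "\<dots> = r^2 / r" by (simp only: r(2))
    also have "\<dots> = r" using r(1) by (simp add: power2_eq_square)
    finally show ?thesis .
  qed
  ultimately have "r \<le> al" by simp
  then have "r^2 \<le> al^2" using r(1) by (simp add: power_mono)
  then show False using r(2) be by simp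
qed

lemma pv_cross:
  assumes pv: "principal_vectors m n P Q u v"
    and P: "P = span_of n a" and Q: "Q = span_of n b"
    and jk: "j < k" "k < n"
  shows "dotp m (u j) (v k) = 0 \<and> dotp m (u k) (v j) = 0"
proof -
  have hk: "u k \<in> P \<and> v k \<in> Q \<and> dotp m (u k) (u k) = 1 \<and> dotp m (v k) (v k) = 1
        \<and> (\<forall>j<k. dotp m (u k) (u j) = 0 \<and> dotp m (v k) (v j) = 0)"
    using pv jk unfolding principal_vectors_def by blast
  have hj: "u j \<in> P \<and> v j \<in> Q \<and> dotp m (u j) (u j) = 1 \<and> dotp m (v j) (v j) = 1
        \<and> (\<forall>i<j. dotp m (u j) (u i) = 0 \<and> dotp m (v j) (v i) = 0)
        \<and> (\<forall>x\<in>P. \<forall>y\<in>Q. dotp m x x = 1 \<and> dotp m y y = 1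
              \<and> (\<forall>i<j. dotp m x (u i) = 0 \<and> dotp m y (v i) = 0)
              \<longrightarrow> dotp m x y \<le> dotp m (u j) (v j))"
    using pv jk unfolding principal_vectors_def by (meson less_trans)
  have hi: "dotp m (u k) (u i) = 0 \<and> dotp m (v k) (v i) = 0" if "i < j" for i
    using hk that jk by auto
  have 1: "dotp m (u j) (v k) = 0"
  proof -
    have "p * dotp m (u j) (v j) + q * dotp m (u j) (v k) \<le> dotp m (u j) (v j)"
      if pq: "p^2 + q^2 = 1" for p q
    proof -
      define y where "y = (\<lambda>i. p * v j i + q * v k i)"
      have yQ: "y \<in> Q" unfolding y_def Q using span_add span_scale hk hj Q by simp
      have "dotp m y y = p * p * dotp m (v j) (v j) + p * q * dotp m (v j) (v k)
          + q * p * dotp m (v k) (v j) + q * q * dotp m (v k) (v k)"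
        unfolding y_def dotp_add_left dotp_add_right dotp_scale_left dotp_scale_right by (simp add: algebra_simps)
      also have "\<dots> = 1" using hk hj jk dotp_comm[of m "v j" "v k"] pq by (simp add: power2_eq_square)
      finally have yy: "dotp m y y = 1" .
      have yo: "dotp m y (v i) = 0" if "i < j" for i
        unfolding y_def dotp_add_left dotp_scale_left using hj hi that by simp
      have "dotp m (u j) y \<le> dotp m (u j) (v j)" using hj yQ yy yo by blast
      then show ?thesis unfolding y_def dotp_add_right dotp_scale_right .
    qed
    then show ?thesis using max_lemma by blast
  qed
  have 2: "dotp m (u k) (v j) = 0"
  proof -
    have "p * dotp m (u j) (v j) + q * dotp m (u k) (v j) \<le> dotp m (u j) (v j)"
      if pq: "p^2 + q^2 = 1" for p q
    proof -
      define x where "x = (\<lambda>i. p * u j i + q * u k i)"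
      have xP: "x \<in> P" unfolding x_def P using span_add span_scale hk hj P by simp
      have "dotp m x x = p * p * dotp m (u j) (u j) + p * q * dotp m (u j) (u k)
          + q * p * dotp m (u k) (u j) + q * q * dotp m (u k) (u k)"
        unfolding x_def dotp_add_left dotp_add_right dotp_scale_left dotp_scale_right by (simp add: algebra_simps)
      also have "\<dots> = 1" using hk hj jk dotp_comm[of m "u j" "u k"] pq by (simp add: power2_eq_square)
      finally have xx: "dotp m x x = 1" .
      have xo: "dotp m x (u i) = 0" if "i < j" for i
        unfolding x_def dotp_add_left dotp_scale_left using hj hi that by simp
      have "dotp m x (v j) \<le> dotp m (u j) (v j)" using hj xP xx xo by blast
      then show ?thesis unfolding x_def dotp_add_left dotp_scale_left .
    qed
    then show ?thesis using max_lemma by blast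
  qed
  show ?thesis using 1 2 by simp
qed

lemma pv_sum:
  assumes a: "ONF m n a" and P: "P = span_of n a" and b: "ONF m n b" and Q: "Q = span_of n b"
    and pv: "principal_vectors m n P Q u v"
  shows "(\<Sum>k<n. (dotp m (u k) (v k))^2) = FF m n a n b"
proof -
  have PR: "\<forall>x\<in>P. in_Rm m x" "\<forall>x\<in>Q. in_Rm m x" using P Q span_in_Rm a b by blast+
  have u: "ONF m n u" and v: "ONF m n v" using pv_ONF[OF pv PR] by auto
  have uP: "\<And>k. k < n \<Longrightarrow> u k \<in> span_of n a" and vQ: "\<And>k. k < n \<Longrightarrow> v k \<in> span_of n b"
    using pv P Q unfolding principal_vectors_def by blast+
  have "FF m n a n b = FF m n u n v"
    using FF_indep[OF a u KL[OF a u uP] b v KL[OF b v vQ]] .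
  also have "\<dots> = (\<Sum>s<n. \<Sum>t<n. if t = s then (dotp m (u s) (v t))^2 else 0)"
    unfolding FF_def
  proof (intro sum.cong refl)
    fix s t assume "s \<in> {..<n}" "t \<in> {..<n}"
    then show "(dotp m (u s) (v t))^2 = (if t = s then (dotp m (u s) (v t))^2 else 0)"
      using pv_cross[OF pv P Q, of s t] pv_cross[OF pv P Q, of t s]
      by (cases s t rule: linorder_cases) auto
  qed
  also have "\<dots> = (\<Sum>k<n. (dotp m (u k) (v k))^2)" by simp
  finally show ?thesis by simp
qed

lemma dist_formula:
  assumes a: "ONF m n a" and P: "P = span_of n a" and b: "ONF m n b" and Q: "Q = span_of n b"
  shows "subspace_dist m n P Q = sqrt (real n - FF m n a n b)"
proof -
  have ex: "\<exists>d. \<exists>u v. principal_vectors m n P Q u v \<and> d = sqrt (\<Sum>k<n. 1 - (dotp m (u k) (v k))^2)"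
    using pv_exists[OF a P b Q, of n] by auto
  from someI_ex[OF ex] obtain u v where
    uv: "principal_vectors m n P Q u v"
        "subspace_dist m n P Q = sqrt (\<Sum>k<n. 1 - (dotp m (u k) (v k))^2)"
    unfolding subspace_dist_def by blast
  have "(\<Sum>k<n. 1 - (dotp m (u k) (v k))^2) = real n - (\<Sum>k<n. (dotp m (u k) (v k))^2)"
    by (simp add: sum_subtractf)
  then show ?thesis using uv pv_sum[OF a P b Q uv(1)] by simp
qed

lemma sum_split_add: fixes n1 n2 :: nat shows "(\<Sum>t<n1+n2. f t) = (\<Sum>t<n1. f t) + (\<Sum>t<n2. f (n1 + t))"
  by (induction n2) (auto simp: add.assoc)

lemma sum_2h: fixes h :: nat shows "(\<Sum>j<2*h. f j) = (\<Sum>j<h. f j) + (\<Sum>j<h. f (j + h))"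
  using sum_split_add[of f h h] by (simp add: mult_2 add.commute)

lemma sum2: "(\<Sum>b<(2::nat). f b) = f 0 + f 1"
  by (simp add: numeral_2_eq_2)

definition ee :: "nat \<Rightarrow> nat \<Rightarrow> real" where "ee t = (\<lambda>j. if j = t then 1 else 0)"
definition zf :: "nat \<Rightarrow> nat \<Rightarrow> real" where "zf = (\<lambda>_ _. 0)"
definition joinfam :: "nat \<Rightarrow> (nat \<Rightarrow> nat \<Rightarrow> real) \<Rightarrow> (nat \<Rightarrow> nat \<Rightarrow> real) \<Rightarrow> nat \<Rightarrow> nat \<Rightarrow> real" where
  "joinfam n1 a b = (\<lambda>t. if t < n1 then a t else b (t - n1))"
definition pairfam :: "nat \<Rightarrow> nat \<Rightarrow> (nat \<Rightarrow> nat \<Rightarrow> real) \<Rightarrow> (nat \<Rightarrow> nat \<Rightarrow> real) \<Rightarrow> nat \<Rightarrow> nat \<Rightarrow> real" where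
  "pairfam h n1 a b = joinfam n1 (\<lambda>t. concat h (a t) (\<lambda>_. 0)) (\<lambda>t. concat h (\<lambda>_. 0) (b t))"

lemma dotp_ee: "s < h \<Longrightarrow> dotp h (ee s) y = y s"
proof -
  assume s: "s < h"
  have "dotp h (ee s) y = (\<Sum>j<h. if j = s then y j else 0)"
    unfolding dotp_def ee_def by (intro sum.cong) auto
  then show ?thesis using s by simp
qed

lemma ONF_ee: "ONF h h ee"
  unfolding ONF_def using dotp_ee by (auto simp: in_Rm_def ee_def)

lemma span_ee: "span_of h ee = {x. in_Rm h x}"
proof
  show "span_of h ee \<subseteq> {x. in_Rm h x}" using span_in_Rm[OF ONF_ee] by auto
  show "{x. in_Rm h x} \<subseteq> span_of h ee"
  proof
    fix x assume x: "x \<in> {x. in_Rm h x}"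
    have "x = lc h x ee"
    proof
      fix j
      show "x j = lc h x ee j"
      proof (cases "j < h")
        case True
        have "lc h x ee j = (\<Sum>t<h. if t = j then x t else 0)"
          unfolding lc_def ee_def by (intro sum.cong) auto
        then show ?thesis using True by simp
      next
        case False
        then show ?thesis using x unfolding lc_def ee_def in_Rm_def by auto
      qed
    qed
    then show "x \<in> span_of h ee" using in_span by metis
  qed
qed

lemma span0: "span_of 0 a = {\<lambda>_. 0}"
  unfolding span_of_def by auto

lemma FF_ee: assumes c: "ONF h k c" shows "FF h h ee k c = real k"
proof -
  have "FF h h ee k c = (\<Sum>t<k. \<Sum>s<h. (dotp h (ee s) (c t))^2)"
    unfolding FF_def by (rule sum.swap)
  also have "\<dots> = (\<Sum>t<k. dotp h (c t) (c t))"
    using dotp_ee by (simp add: dotp_def power2_eq_square)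
  also have "\<dots> = (\<Sum>t<k. 1)" using c unfolding ONF_def by simp
  finally show ?thesis by simp
qed

lemma FF_zero_left: "FF m 0 a k b = 0" unfolding FF_def by simp
lemma FF_zero_right: "FF m n a 0 b = 0" unfolding FF_def by simp

lemma FF_self: "ONF m n a \<Longrightarrow> FF m n a n a = real n"
proof -
  assume a: "ONF m n a"
  have "FF m n a n a = (\<Sum>s<n. \<Sum>t<n. if t = s then 1 else 0)"
    unfolding FF_def using a unfolding ONF_def by (intro sum.cong) auto
  then show ?thesis by simp
qed

lemma FF_join_left: "FF m (n1+n2) (joinfam n1 a1 a2) k b = FF m n1 a1 k b + FF m n2 a2 k b"
  unfolding FF_def sum_split_add joinfam_def by simp

lemma FF_join_right: "FF m k b (n1+n2) (joinfam n1 a1 a2) = FF m k b n1 a1 + FF m k b n2 a2"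
  using FF_join_left FF_sym by metis

lemma lc_join: "lc (n1+n2) c (joinfam n1 a b) = (\<lambda>j. lc n1 c a j + lc n2 (\<lambda>t. c (n1 + t)) b j)"
  unfolding lc_def sum_split_add joinfam_def by simp

lemma ONF_join: assumes "ONF m n1 a" "ONF m n2 b" "\<And>s t. s < n1 \<Longrightarrow> t < n2 \<Longrightarrow> dotp m (a s) (b t) = 0"
  and "N = n1 + n2"
  shows "ONF m N (joinfam n1 a b)"
  using assms unfolding ONF_def joinfam_def by (auto simp: dotp_comm)

lemma dotp_concat: "dotp (2*h) (concat h x y) (concat h x' y') = dotp h x x' + dotp h y y'"
  unfolding dotp_def sum_2h concat_def by simp

lemma in_Rm_concat: "in_Rm (2*h) (concat h x y)"
  unfolding in_Rm_def concat_def by auto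

lemma dotp_zero_left: "dotp m (\<lambda>_. 0) y = 0" unfolding dotp_def by simp
lemma dotp_zero_right: "dotp m y (\<lambda>_. 0) = 0" unfolding dotp_def by simp

lemma ONF_concat1: "ONF h n a \<Longrightarrow> ONF (2*h) n (\<lambda>t. concat h (a t) (\<lambda>_. 0))"
  unfolding ONF_def using dotp_concat dotp_zero_left in_Rm_concat by simp
lemma ONF_concat2: "ONF h n a \<Longrightarrow> ONF (2*h) n (\<lambda>t. concat h (\<lambda>_. 0) (a t))"
  unfolding ONF_def using dotp_concat dotp_zero_left in_Rm_concat by simp

lemma ONF_pair: assumes "ONF h n1 a" "ONF h n2 b" "N = n1 + n2"
  shows "ONF (2*h) N (pairfam h n1 a b)"
  unfolding pairfam_def
  by (rule ONF_join[OF ONF_concat1[OF assms(1)] ONF_concat2[OF assms(2)] _ assms(3)])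
     (simp add: dotp_concat dotp_zero_left dotp_zero_right)

lemma FF_concat11: "FF (2*h) n (\<lambda>t. concat h (a t) (\<lambda>_. 0)) k (\<lambda>t. concat h (b t) (\<lambda>_. 0)) = FF h n a k b"
  unfolding FF_def dotp_concat dotp_zero_left by simp
lemma FF_concat22: "FF (2*h) n (\<lambda>t. concat h (\<lambda>_. 0) (a t)) k (\<lambda>t. concat h (\<lambda>_. 0) (b t)) = FF h n a k b"
  unfolding FF_def dotp_concat dotp_zero_left by simp
lemma FF_concat12: "FF (2*h) n (\<lambda>t. concat h (a t) (\<lambda>_. 0)) k (\<lambda>t. concat h (\<lambda>_. 0) (b t)) = 0"
  unfolding FF_def dotp_concat dotp_zero_left dotp_zero_right by simp
lemma FF_concat21: "FF (2*h) n (\<lambda>t. concat h (\<lambda>_. 0) (a t)) k (\<lambda>t. concat h (b t) (\<lambda>_. 0)) = 0"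
  unfolding FF_def dotp_concat dotp_zero_left dotp_zero_right by simp

lemma FF_pair: assumes "N = n1 + n2" "K = k1 + k2"
  shows "FF (2*h) N (pairfam h n1 a1 a2) K (pairfam h k1 b1 b2) = FF h n1 a1 k1 b1 + FF h n2 a2 k2 b2"
  unfolding assms pairfam_def FF_join_left FF_join_right
    FF_concat11 FF_concat22 FF_concat12 FF_concat21 by simp

lemma span_pair: assumes "N = n1 + n2"
  shows "{concat h x y | x y. x \<in> span_of n1 a \<and> y \<in> span_of n2 b} = span_of N (pairfam h n1 a b)"
proof -
  have key: "lc N c (pairfam h n1 a b) = concat h (lc n1 c a) (lc n2 (\<lambda>t. c (n1 + t)) b)" for c
  proof
    fix j
    show "lc N c (pairfam h n1 a b) j = concat h (lc n1 c a) (lc n2 (\<lambda>t. c (n1 + t)) b) j"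
      unfolding assms pairfam_def lc_join by (simp add: lc_def concat_def)
  qed
  show ?thesis
  proof
    show "{concat h x y | x y. x \<in> span_of n1 a \<and> y \<in> span_of n2 b} \<subseteq> span_of N (pairfam h n1 a b)"
    proof clarify
      fix x y assume "x \<in> span_of n1 a" "y \<in> span_of n2 b"
      then obtain c d where cd: "x = lc n1 c a" "y = lc n2 d b" unfolding span_of_lc by auto
      define c' where "c' t = (if t < n1 then c t else d (t - n1))" for t
      have "lc n1 c' a = lc n1 c a" unfolding lc_def c'_def by auto
      moreover have "lc n2 (\<lambda>t. c' (n1 + t)) b = lc n2 d b" unfolding lc_def c'_def by auto
      ultimately have "concat h x y = lc N c' (pairfam h n1 a b)" using key cd by simp
      then show "concat h x y \<in> span_of N (pairfam h n1 a b)" using in_span by metis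
    qed
    show "span_of N (pairfam h n1 a b) \<subseteq> {concat h x y | x y. x \<in> span_of n1 a \<and> y \<in> span_of n2 b}"
      unfolding span_of_lc using key in_span by blast
  qed
qed

definition goodpair :: "nat \<Rightarrow> nat \<Rightarrow> (nat \<Rightarrow> real) set \<Rightarrow> (nat \<Rightarrow> nat \<Rightarrow> real) \<Rightarrow> (nat \<Rightarrow> nat \<Rightarrow> real) \<Rightarrow> bool" where
  "goodpair m n S a b \<longleftrightarrow> ONF m n a \<and> ONF m n b \<and> (\<forall>s<n. \<forall>t<n. dotp m (a s) (b t) = 0) \<and> S = span_of n a"

lemma complete:
  assumes g: "goodpair m n S a b" and mn: "m = n + n"
  shows "span_of m (joinfam n a b) = span_of m ee" "ONF m m (joinfam n a b)"
proof -
  show J: "ONF m m (joinfam n a b)" using g mn unfolding goodpair_def by (intro ONF_join) auto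
  have "joinfam n a b t \<in> span_of m ee" if "t < m" for t
    using span_in_Rm[OF J span_basis[OF that]] span_ee by auto
  then show "span_of m (joinfam n a b) = span_of m ee" using KL[OF ONF_ee J] by simp
qed

lemma complete_FF:
  assumes g: "goodpair m n S a b" and mn: "m = n + n" and c: "ONF m k c"
  shows "FF m n a k c + FF m n b k c = real k"
proof -
  have "FF m n a k c + FF m n b k c = FF m m (joinfam n a b) k c"
    using FF_join_left[of m n n a b k c] mn by simp
  also have "\<dots> = FF m m ee k c"
    using FF_indep_left[OF complete(2)[OF g mn] ONF_ee complete(1)[OF g mn]] .
  also have "\<dots> = real k" using FF_ee[OF c] .
  finally show ?thesis .
qed

lemma complete_perp:
  assumes g: "goodpair m n S a b" and mn: "m = n + n"
  shows "perp m S = span_of n b"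
proof
  have a: "ONF m n a" and b: "ONF m n b" and ab: "\<forall>s<n. \<forall>t<n. dotp m (a s) (b t) = 0"
    and S: "S = span_of n a" using g unfolding goodpair_def by auto
  show "span_of n b \<subseteq> perp m S"
  proof
    fix y assume y: "y \<in> span_of n b"
    then obtain d where yd: "y = lc n d b" unfolding span_of_lc by auto
    have "dotp m x y = 0" if xS: "x \<in> S" for x
    proof -
      obtain c where "x = lc n c a" using xS S unfolding span_of_lc by auto
      moreover have "\<forall>t<n. dotp m (lc n c a) (b t) = 0" using ab by (simp add: dotp_lc_left)
      ultimately show ?thesis unfolding yd dotp_lc_right by simp
    qed
    then show "y \<in> perp m S" unfolding perp_def using span_in_Rm[OF b y] by auto
  qed
  show "perp m S \<subseteq> span_of n b"
  proof
    fix y assume y: "y \<in> perp m S"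
    then have yR: "in_Rm m y" and yo: "\<And>x. x \<in> S \<Longrightarrow> dotp m x y = 0" unfolding perp_def by auto
    have J: "ONF m m (joinfam n a b)" using complete(2)[OF g mn] .
    have "y \<in> span_of m (joinfam n a b)" using complete(1)[OF g mn] span_ee yR by auto
    then have "y = lc m (\<lambda>s. dotp m y (joinfam n a b s)) (joinfam n a b)" using span_rep[OF J] by blast
    also have "\<dots> = (\<lambda>j. lc n (\<lambda>s. dotp m y (joinfam n a b s)) a j
        + lc n (\<lambda>t. dotp m y (joinfam n a b (n + t))) b j)"
      using lc_join[of n n] mn by simp
    also have "\<dots> = lc n (\<lambda>t. dotp m y (b t)) b"
    proof
      fix j
      have ya: "dotp m y (a s) = 0" if "s < n" for s
        using yo[of "a s"] span_basis[OF that, of a] S dotp_comm by metis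
      have "lc n (\<lambda>s. dotp m y (joinfam n a b s)) a j = 0"
        unfolding lc_def joinfam_def using ya by simp
      moreover have "lc n (\<lambda>t. dotp m y (joinfam n a b (n + t))) b j = lc n (\<lambda>t. dotp m y (b t)) b j"
        unfolding lc_def joinfam_def by simp
      ultimately show "lc n (\<lambda>s. dotp m y (joinfam n a b s)) a j
        + lc n (\<lambda>t. dotp m y (joinfam n a b (n + t))) b j = lc n (\<lambda>t. dotp m y (b t)) b j" by simp
    qed
    finally show "y \<in> span_of n b" using in_span by metis
  qed
qed

definition rowO :: "nat \<Rightarrow> (nat \<Rightarrow> nat \<Rightarrow> real) \<Rightarrow> bool" where
  "rowO h Q \<longleftrightarrow> (\<forall>r<h. \<forall>s<h. (\<Sum>c<h. Q r c * Q s c) = (if r = s then 1 else 0))"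
definition colO :: "nat \<Rightarrow> (nat \<Rightarrow> nat \<Rightarrow> real) \<Rightarrow> bool" where
  "colO h Q \<longleftrightarrow> (\<forall>c<h. \<forall>d<h. (\<Sum>r<h. Q r c * Q r d) = (if c = d then 1 else 0))"
definition ip :: "nat \<Rightarrow> (nat \<Rightarrow> nat \<Rightarrow> real) \<Rightarrow> (nat \<Rightarrow> nat \<Rightarrow> real) \<Rightarrow> real" where
  "ip h Q Q' = (\<Sum>r<h. \<Sum>c<h. Q r c * Q' r c)"

lemma ip_self: "rowO h Q \<Longrightarrow> ip h Q Q = real h"
  unfolding rowO_def ip_def by simp

lemma kron_val: "r < 2*h \<Longrightarrow> c < 2*h \<Longrightarrow> kron2 h B Q r c = B (r div h) (c div h) * Q (r mod h) (c mod h)"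
  unfolding kron2_def by simp

lemma kron_row:
  assumes h: "h > 0" and r: "r < 2*h" and s: "s < 2*h"
  shows "(\<Sum>c<2*h. kron2 h B Q r c * kron2 h B' Q' s c)
     = (\<Sum>b<2. B (r div h) b * B' (s div h) b) * (\<Sum>c<h. Q (r mod h) c * Q' (s mod h) c)"
proof -
  have "(\<Sum>c<2*h. kron2 h B Q r c * kron2 h B' Q' s c)
     = (\<Sum>c<h. kron2 h B Q r c * kron2 h B' Q' s c) + (\<Sum>c<h. kron2 h B Q r (c + h) * kron2 h B' Q' s (c + h))"
    by (rule sum_2h)
  also have "\<dots> = (\<Sum>c<h. B (r div h) 0 * B' (s div h) 0 * (Q (r mod h) c * Q' (s mod h) c))
      + (\<Sum>c<h. B (r div h) 1 * B' (s div h) 1 * (Q (r mod h) c * Q' (s mod h) c))"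
    using r s h by (intro arg_cong2[where f="(+)"] sum.cong) (auto simp: kron_val)
  also have "\<dots> = (\<Sum>b<2. B (r div h) b * B' (s div h) b) * (\<Sum>c<h. Q (r mod h) c * Q' (s mod h) c)"
    by (simp add: sum2 sum_distrib_left[symmetric] distrib_right)
  finally show ?thesis .
qed

lemma kron_col:
  assumes h: "h > 0" and c: "c < 2*h" and d: "d < 2*h"
  shows "(\<Sum>r<2*h. kron2 h B Q r c * kron2 h B' Q' r d)
     = (\<Sum>a<2. B a (c div h) * B' a (d div h)) * (\<Sum>r<h. Q r (c mod h) * Q' r (d mod h))"
proof -
  have "(\<Sum>r<2*h. kron2 h B Q r c * kron2 h B' Q' r d)
     = (\<Sum>r<h. kron2 h B Q r c * kron2 h B' Q' r d) + (\<Sum>r<h. kron2 h B Q (r + h) c * kron2 h B' Q' (r + h) d)"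
    by (rule sum_2h)
  also have "\<dots> = (\<Sum>r<h. B 0 (c div h) * B' 0 (d div h) * (Q r (c mod h) * Q' r (d mod h)))
      + (\<Sum>r<h. B 1 (c div h) * B' 1 (d div h) * (Q r (c mod h) * Q' r (d mod h)))"
    using c d h by (intro arg_cong2[where f="(+)"] sum.cong) (auto simp: kron_val)
  also have "\<dots> = (\<Sum>a<2. B a (c div h) * B' a (d div h)) * (\<Sum>r<h. Q r (c mod h) * Q' r (d mod h))"
    by (simp add: sum2 sum_distrib_left[symmetric] distrib_right)
  finally show ?thesis .
qed

lemma kron_ip:
  assumes h: "h > 0"
  shows "ip (2*h) (kron2 h B Q) (kron2 h B' Q') = ip 2 B B' * ip h Q Q'"
proof -
  have "ip (2*h) (kron2 h B Q) (kron2 h B' Q') =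
     (\<Sum>r<2*h. (\<Sum>b<2. B (r div h) b * B' (r div h) b) * (\<Sum>c<h. Q (r mod h) c * Q' (r mod h) c))"
    unfolding ip_def using kron_row[OF h] by (intro sum.cong) auto
  also have "\<dots> = (\<Sum>r<h. (\<Sum>b<2. B 0 b * B' 0 b) * (\<Sum>c<h. Q r c * Q' r c))
      + (\<Sum>r<h. (\<Sum>b<2. B 1 b * B' 1 b) * (\<Sum>c<h. Q r c * Q' r c))"
    unfolding sum_2h using h by (intro arg_cong2[where f="(+)"] sum.cong) auto
  also have "\<dots> = (\<Sum>b<2. B 0 b * B' 0 b) * ip h Q Q' + (\<Sum>b<2. B 1 b * B' 1 b) * ip h Q Q'"
    unfolding ip_def by (simp only: sum_distrib_left)
  also have "\<dots> = ip 2 B B' * ip h Q Q'"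
    unfolding ip_def sum2 by (simp add: algebra_simps)
  finally show ?thesis .
qed

lemma divmod_eq_iff: "(h::nat) > 0 \<Longrightarrow> (r = s) = (r div h = s div h \<and> r mod h = s mod h)"
  by (metis div_mult_mod_eq)

lemma kron_rowO:
  assumes h: "h > 0" and B: "rowO 2 B" and Q: "rowO h Q"
  shows "rowO (2*h) (kron2 h B Q)"
  unfolding rowO_def
proof (intro allI impI)
  fix r s assume r: "r < 2*h" and s: "s < 2*h"
  have d: "r div h < 2" "s div h < 2" using r s h by (auto simp: less_mult_imp_div_less mult.commute)
  have m: "r mod h < h" "s mod h < h" using h by auto
  show "(\<Sum>c<2*h. kron2 h B Q r c * kron2 h B Q s c) = (if r = s then 1 else 0)"
    unfolding kron_row[OF h r s] using B Q d m divmod_eq_iff[OF h, of r s]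
    unfolding rowO_def by auto
qed

lemma kron_colO:
  assumes h: "h > 0" and B: "colO 2 B" and Q: "colO h Q"
  shows "colO (2*h) (kron2 h B Q)"
  unfolding colO_def
proof (intro allI impI)
  fix r s assume r: "r < 2*h" and s: "s < 2*h"
  have d: "r div h < 2" "s div h < 2" using r s h by (auto simp: less_mult_imp_div_less mult.commute)
  have m: "r mod h < h" "s mod h < h" using h by auto
  show "(\<Sum>c<2*h. kron2 h B Q c r * kron2 h B Q c s) = (if r = s then 1 else 0)"
    unfolding kron_col[OF h r s] using B Q d m divmod_eq_iff[OF h, of r s]
    unfolding colO_def by auto
qed

definition Bset :: "(nat \<Rightarrow> nat \<Rightarrow> real) set" where
  "Bset = {B_id, B_diag, B_swap, B_rot}"

lemma B_neq: "B_id \<noteq> B_diag" "B_id \<noteq> B_swap" "B_id \<noteq> B_rot" "B_diag \<noteq> B_swap" "B_diag \<noteq> B_rot" "B_swap \<noteq> B_rot"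
  by (auto simp: fun_eq_iff B_id_def B_diag_def B_swap_def B_rot_def dest!: spec[of _ 1] spec[of _ 0])

lemma card_Bset: "card Bset = 4"
  unfolding Bset_def using B_neq by (simp add: B_neq[symmetric])

lemma lt2: "(x::nat) < 2 \<longleftrightarrow> x = 0 \<or> x = 1" by auto

lemma B_orth: "B \<in> Bset \<Longrightarrow> rowO 2 B \<and> colO 2 B"
  unfolding Bset_def rowO_def colO_def lt2
  by (auto simp: sum2 B_id_def B_diag_def B_swap_def B_rot_def)

lemma B_ip: "B \<in> Bset \<Longrightarrow> B' \<in> Bset \<Longrightarrow> ip 2 B B' = (if B = B' then 2 else 0)"
  unfolding Bset_def using B_neq B_neq[symmetric]
  by (auto simp: ip_def sum2 B_id_def B_diag_def B_swap_def B_rot_def)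

lemma Qs_step: "Qs (Suc (Suc k)) = (\<lambda>(B, Q). kron2 (2^k) B Q) ` (Bset \<times> Qs (Suc k))"
  unfolding Bset_def by auto

definition QInv :: "nat \<Rightarrow> bool" where
  "QInv i \<longleftrightarrow> finite (Qs i) \<and> card (Qs i) = 2 * 4^(i-1)
     \<and> (\<forall>Q\<in>Qs i. rowO (2^(i-1)) Q \<and> colO (2^(i-1)) Q)
     \<and> (\<forall>Q\<in>Qs i. \<forall>Q'\<in>Qs i. Q \<noteq> Q' \<longrightarrow> ip (2^(i-1)) Q Q' = 0 \<or> ip (2^(i-1)) Q Q' = - real (2^(i-1)))"

lemma QInv_1: "QInv 1"
proof -
  define q1 :: "nat \<Rightarrow> nat \<Rightarrow> real" where "q1 = (\<lambda>r c. if r = 0 \<and> c = 0 then 1 else (0::real))"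
  define q2 :: "nat \<Rightarrow> nat \<Rightarrow> real" where "q2 = (\<lambda>r c. if r = 0 \<and> c = 0 then -1 else (0::real))"
  have Q1: "Qs 1 = {q1, q2}" unfolding q1_def q2_def by simp
  have ne: "q1 \<noteq> q2" unfolding q1_def q2_def by (auto simp: fun_eq_iff dest!: spec[of _ 0])
  show ?thesis unfolding QInv_def Q1 using ne
    by (auto simp: rowO_def colO_def ip_def q1_def q2_def)
qed

lemma QInv_step: assumes "QInv (Suc k)" shows "QInv (Suc (Suc k))"
proof -
  define h where "h = (2::nat)^k"
  have h0: "h > 0" unfolding h_def by simp
  have hh: "(2::nat)^(Suc (Suc k) - 1) = 2 * h" "(2::nat)^(Suc k - 1) = h" unfolding h_def by auto
  have fin: "finite (Qs (Suc k))" and cd: "card (Qs (Suc k)) = 2 * 4^k"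
    and orth: "\<And>Q. Q \<in> Qs (Suc k) \<Longrightarrow> rowO h Q \<and> colO h Q"
    and ipd: "\<And>Q Q'. Q \<in> Qs (Suc k) \<Longrightarrow> Q' \<in> Qs (Suc k) \<Longrightarrow> Q \<noteq> Q' \<Longrightarrow> ip h Q Q' = 0 \<or> ip h Q Q' = - real h"
    using assms unfolding QInv_def hh by auto
  define f where "f = (\<lambda>(B, Q). kron2 h B Q)"
  have QS: "Qs (Suc (Suc k)) = f ` (Bset \<times> Qs (Suc k))" unfolding Qs_step f_def h_def by simp
  have ipf: "ip (2*h) (f p) (f p') = (if p = p' then 2 * real h else if fst p = fst p' then 2 * ip h (snd p) (snd p') else 0)"
    if "p \<in> Bset \<times> Qs (Suc k)" "p' \<in> Bset \<times> Qs (Suc k)" for p p'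
    using that kron_ip[OF h0] B_ip ip_self orth unfolding f_def by (auto split: prod.splits)
  have ipv: "ip (2*h) (f p) (f p') = 0 \<or> ip (2*h) (f p) (f p') = - real (2*h)"
    if "p \<in> Bset \<times> Qs (Suc k)" "p' \<in> Bset \<times> Qs (Suc k)" "p \<noteq> p'" for p p'
  proof (cases "fst p = fst p'")
    case True
    then have "snd p \<noteq> snd p'" using that(3) by (metis prod.expand)
    then show ?thesis using ipf[OF that(1,2)] that ipd[of "snd p" "snd p'"] True by auto
  qed (use ipf[OF that(1,2)] in auto)
  have inj: "inj_on f (Bset \<times> Qs (Suc k))"
  proof (rule inj_onI, rule ccontr)
    fix p p' assume pp: "p \<in> Bset \<times> Qs (Suc k)" "p' \<in> Bset \<times> Qs (Suc k)" "f p = f p'" "p \<noteq> p'"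
    have "ip (2*h) (f p) (f p') = 2 * real h" using ipf[OF pp(1) pp(1)] pp(3) by simp
    then show False using ipv[OF pp(1,2,4)] h0 by auto
  qed
  have "finite (Qs (Suc (Suc k)))" unfolding QS using fin by (simp add: Bset_def)
  moreover have "card (Qs (Suc (Suc k))) = 2 * 4^(Suc (Suc k) - 1)"
    unfolding QS card_image[OF inj] card_cartesian_product card_Bset cd by simp
  moreover have "\<forall>Q\<in>Qs (Suc (Suc k)). rowO (2*h) Q \<and> colO (2*h) Q"
    unfolding QS f_def using B_orth orth kron_rowO[OF h0] kron_colO[OF h0] by auto
  moreover have "\<forall>Q\<in>Qs (Suc (Suc k)). \<forall>Q'\<in>Qs (Suc (Suc k)). Q \<noteq> Q' \<longrightarrow>
      ip (2*h) Q Q' = 0 \<or> ip (2*h) Q Q' = - real (2*h)"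
    unfolding QS using ipv by blast
  ultimately show ?thesis unfolding QInv_def hh by simp
qed

lemma QInv_all: "i \<ge> 1 \<Longrightarrow> QInv i"
proof (induction i rule: nat_induct_at_least)
  case base then show ?case using QInv_1 by simp
next
  case (Suc i)
  then obtain k where "i = Suc k" by (cases i) auto
  then show ?case using QInv_step Suc by simp
qed

definition s2 :: real where "s2 = 1 / sqrt 2"
lemma s2_sq: "s2 * s2 = 1/2" unfolding s2_def by (simp add: real_sqrt_mult[symmetric])

definition aQ :: "nat \<Rightarrow> (nat \<Rightarrow> nat \<Rightarrow> real) \<Rightarrow> nat \<Rightarrow> nat \<Rightarrow> real" where
  "aQ h Q r = (\<lambda>j. s2 * IQ h Q r j)"
definition negM :: "(nat \<Rightarrow> nat \<Rightarrow> real) \<Rightarrow> nat \<Rightarrow> nat \<Rightarrow> real" where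
  "negM Q = (\<lambda>r c. - Q r c)"
definition Qv :: "nat \<Rightarrow> (nat \<Rightarrow> nat \<Rightarrow> real) \<Rightarrow> (nat \<Rightarrow> real) \<Rightarrow> nat \<Rightarrow> real" where
  "Qv h Q y r = (\<Sum>c<h. Q r c * y c)"

lemma aQ_concat: "r < h \<Longrightarrow> aQ h Q r = concat h (\<lambda>c. s2 * ee r c) (\<lambda>c. s2 * Q r c)"
  unfolding aQ_def IQ_def concat_def ee_def by (auto simp: fun_eq_iff)

lemma dotp_s2: "dotp h (\<lambda>c. s2 * x c) (\<lambda>c. s2 * y c) = dotp h x y / 2"
  unfolding dotp_scale_left dotp_scale_right using s2_sq by (simp add: mult.assoc[symmetric])

lemma rowO_neg: "rowO h Q \<Longrightarrow> rowO h (negM Q)" unfolding rowO_def negM_def by simp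
lemma colO_neg: "colO h Q \<Longrightarrow> colO h (negM Q)" unfolding colO_def negM_def by simp

lemma dotp_rows: "dotp h (\<lambda>c. Q r c) (\<lambda>c. Q' s c) = (\<Sum>c<h. Q r c * Q' s c)"
  unfolding dotp_def by simp

lemma dotp_aQ: assumes r: "r < h" and s: "s < h"
  shows "dotp (2*h) (aQ h Q r) (aQ h Q' s) = ((if r = s then 1 else 0) + (\<Sum>c<h. Q r c * Q' s c)) / 2"
proof -
  have "dotp (2*h) (aQ h Q r) (aQ h Q' s) = dotp h (ee r) (ee s) / 2 + dotp h (Q r) (Q' s) / 2"
    unfolding aQ_concat[OF r] aQ_concat[OF s] dotp_concat dotp_s2 by simp
  moreover have "dotp h (ee r) (ee s) = (if r = s then 1 else 0)" using dotp_ee[OF r] by (simp add: ee_def)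
  moreover have "dotp h (Q r) (Q' s) = (\<Sum>c<h. Q r c * Q' s c)" unfolding dotp_def by simp
  ultimately show ?thesis by (simp add: add_divide_distrib)
qed

lemma ONF_aQ: assumes "rowO h Q" shows "ONF (2*h) h (aQ h Q)"
  unfolding ONF_def
proof (intro conjI allI impI)
  fix t assume "t < h" then show "in_Rm (2*h) (aQ h Q t)" using aQ_concat in_Rm_concat by simp
next
  fix s t assume st: "s < h" "t < h"
  have "(\<Sum>c<h. Q s c * Q t c) = (if s = t then 1 else 0)" using assms st unfolding rowO_def by simp
  then show "dotp (2*h) (aQ h Q s) (aQ h Q t) = (if s = t then 1 else 0)"
    using dotp_aQ[OF st, of Q Q] by simp
qed

lemma cross_aQ: assumes "rowO h Q" "r < h" "s < h"
  shows "dotp (2*h) (aQ h Q r) (aQ h (negM Q) s) = 0"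
proof -
  have "(\<Sum>c<h. Q r c * negM Q s c) = - (\<Sum>c<h. Q r c * Q s c)"
    unfolding negM_def by (simp add: sum_negf)
  also have "\<dots> = - (if r = s then 1 else 0)" using assms unfolding rowO_def by simp
  finally show ?thesis using dotp_aQ[OF assms(2,3), of Q "negM Q"] by simp
qed

lemma goodpair_aQ: "rowO h Q \<Longrightarrow> goodpair (2*h) h (span_of h (aQ h Q)) (aQ h Q) (aQ h (negM Q))"
  unfolding goodpair_def using ONF_aQ rowO_neg cross_aQ by auto

lemma span_aQ: "rowspace h (2*h) (IQ h Q) = span_of h (aQ h Q)"
proof
  have z: "IQ h Q k j = 0" if "\<not> j < 2*h" for k j using that unfolding IQ_def by auto
  show "rowspace h (2*h) (IQ h Q) \<subseteq> span_of h (aQ h Q)"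
  proof
    fix v assume "v \<in> rowspace h (2*h) (IQ h Q)"
    then obtain c where v: "v = (\<lambda>j. if j < 2*h then (\<Sum>k<h. c k * IQ h Q k j) else 0)"
      unfolding rowspace_def by auto
    have "v = lc h (\<lambda>k. sqrt 2 * c k) (aQ h Q)"
      unfolding v lc_def aQ_def s2_def using z by (auto simp: fun_eq_iff)
    then show "v \<in> span_of h (aQ h Q)" using in_span by metis
  qed
  show "span_of h (aQ h Q) \<subseteq> rowspace h (2*h) (IQ h Q)"
  proof
    fix v assume "v \<in> span_of h (aQ h Q)"
    then obtain c where v: "v = lc h c (aQ h Q)" unfolding span_of_lc by auto
    have "v = (\<lambda>j. if j < 2*h then (\<Sum>k<h. (s2 * c k) * IQ h Q k j) else 0)"
      unfolding v lc_def aQ_def using z by (auto simp: fun_eq_iff mult_ac)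
    then show "v \<in> rowspace h (2*h) (IQ h Q)" unfolding rowspace_def
      by (intro CollectI exI[of _ "\<lambda>k. s2 * c k"])
  qed
qed

lemma Qv_norm: assumes Q: "colO h Q"
  shows "(\<Sum>r<h. (Qv h Q y r)^2) = dotp h y y"
proof -
  have "(\<Sum>r<h. (Qv h Q y r)^2) = (\<Sum>r<h. \<Sum>c<h. \<Sum>d<h. Q r c * y c * (Q r d * y d))"
    by (simp only: Qv_def power2_eq_square sum_product)
  also have "\<dots> = (\<Sum>c<h. \<Sum>r<h. \<Sum>d<h. Q r c * y c * (Q r d * y d))"
    by (rule sum.swap)
  also have "\<dots> = (\<Sum>c<h. \<Sum>d<h. \<Sum>r<h. Q r c * y c * (Q r d * y d))"
    by (intro sum.cong refl sum.swap)
  also have "\<dots> = (\<Sum>c<h. \<Sum>d<h. y c * y d * (\<Sum>r<h. Q r c * Q r d))"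
  proof (intro sum.cong refl)
    fix c d
    show "(\<Sum>r<h. Q r c * y c * (Q r d * y d)) = y c * y d * (\<Sum>r<h. Q r c * Q r d)"
      unfolding sum_distrib_left by (intro sum.cong refl) (simp only: mult_ac)
  qed
  also have "\<dots> = (\<Sum>c<h. \<Sum>d<h. if d = c then y c * y d else 0)"
    using Q unfolding colO_def by (intro sum.cong refl) auto
  also have "\<dots> = dotp h y y" unfolding dotp_def by simp
  finally show ?thesis .
qed

lemma dotp_aQ_concat: assumes "r < h"
  shows "dotp (2*h) (aQ h Q r) (concat h x y) = s2 * (x r + Qv h Q y r)"
  unfolding aQ_concat[OF assms] dotp_concat dotp_scale_left dotp_ee[OF assms] Qv_def
  by (simp add: dotp_def distrib_left)

lemma G_aQ: assumes Q: "colO h Q"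
  shows "(\<Sum>r<h. (dotp (2*h) (aQ h Q r) (concat h x y))^2)
     = (dotp h x x + dotp h y y) / 2 + (\<Sum>r<h. x r * Qv h Q y r)"
proof -
  have "(\<Sum>r<h. (dotp (2*h) (aQ h Q r) (concat h x y))^2)
      = (\<Sum>r<h. (x r)^2 / 2 + (Qv h Q y r)^2 / 2 + x r * Qv h Q y r)"
  proof (intro sum.cong refl)
    fix r assume "r \<in> {..<h}"
    then have e: "dotp (2*h) (aQ h Q r) (concat h x y) = s2 * (x r + Qv h Q y r)" by (simp add: dotp_aQ_concat)
    have s2p: "s2^2 = 1/2" using s2_sq by (simp add: power2_eq_square)
    have "(s2 * (x r + Qv h Q y r))^2 = (x r + Qv h Q y r)^2 / 2" by (simp add: power_mult_distrib s2p)
    also have "\<dots> = (x r)^2 / 2 + (Qv h Q y r)^2 / 2 + x r * Qv h Q y r"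
      by (simp add: power2_sum add_divide_distrib)
    finally show "(dotp (2*h) (aQ h Q r) (concat h x y))^2 = (x r)^2 / 2 + (Qv h Q y r)^2 / 2 + x r * Qv h Q y r"
      using e by simp
  qed
  also have "\<dots> = (\<Sum>r<h. (x r)^2) / 2 + (\<Sum>r<h. (Qv h Q y r)^2) / 2 + (\<Sum>r<h. x r * Qv h Q y r)"
    by (simp add: sum.distrib sum_divide_distrib)
  also have "\<dots> = (dotp h x x + dotp h y y) / 2 + (\<Sum>r<h. x r * Qv h Q y r)"
    using Qv_norm[OF Q] by (simp add: dotp_def power2_eq_square add_divide_distrib)
  finally show ?thesis .
qed

lemma Qv_zero: "Qv h Q (\<lambda>_. 0) = (\<lambda>_. 0)" unfolding Qv_def by (simp add: fun_eq_iff)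

lemma FF_aQ_pair: assumes Q: "colO h Q" and c1: "ONF h k1 c1" and c2: "ONF h k2 c2" and K: "K = k1 + k2"
  shows "FF (2*h) h (aQ h Q) K (pairfam h k1 c1 c2) = real K / 2"
proof -
  have 1: "FF (2*h) h (aQ h Q) k1 (\<lambda>t. concat h (c1 t) (\<lambda>_. 0)) = real k1 / 2"
  proof -
    have "FF (2*h) h (aQ h Q) k1 (\<lambda>t. concat h (c1 t) (\<lambda>_. 0))
      = (\<Sum>t<k1. \<Sum>r<h. (dotp (2*h) (aQ h Q r) (concat h (c1 t) (\<lambda>_. 0)))^2)"
      unfolding FF_def by (rule sum.swap)
    also have "\<dots> = (\<Sum>t<k1. 1/2)"
      using G_aQ[OF Q] c1 unfolding ONF_def by (simp add: Qv_zero dotp_zero_left)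
    finally show ?thesis by simp
  qed
  have 2: "FF (2*h) h (aQ h Q) k2 (\<lambda>t. concat h (\<lambda>_. 0) (c2 t)) = real k2 / 2"
  proof -
    have "FF (2*h) h (aQ h Q) k2 (\<lambda>t. concat h (\<lambda>_. 0) (c2 t))
      = (\<Sum>t<k2. \<Sum>r<h. (dotp (2*h) (aQ h Q r) (concat h (\<lambda>_. 0) (c2 t)))^2)"
      unfolding FF_def by (rule sum.swap)
    also have "\<dots> = (\<Sum>t<k2. 1/2)"
      using G_aQ[OF Q] c2 unfolding ONF_def by (simp add: dotp_zero_left)
    finally show ?thesis by simp
  qed
  show ?thesis unfolding K pairfam_def FF_join_right 1 2 by (simp add: add_divide_distrib)
qed

lemma FF_aQ_aQ: assumes Q: "colO h Q" and Q': "rowO h Q'"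
  shows "FF (2*h) h (aQ h Q) h (aQ h Q') = (real h + ip h Q Q') / 2"
proof -
  have "FF (2*h) h (aQ h Q) h (aQ h Q') = (\<Sum>s<h. \<Sum>r<h. (dotp (2*h) (aQ h Q r) (aQ h Q' s))^2)"
    unfolding FF_def by (rule sum.swap)
  also have "\<dots> = (\<Sum>s<h. 1/2 + (\<Sum>c<h. Q s c * Q' s c) / 2)"
  proof (intro sum.cong refl)
    fix s assume s: "s \<in> {..<h}"
    then have s': "s < h" by simp
    have "(\<Sum>r<h. (dotp (2*h) (aQ h Q r) (aQ h Q' s))^2)
       = (dotp h (\<lambda>c. s2 * ee s c) (\<lambda>c. s2 * ee s c) + dotp h (\<lambda>c. s2 * Q' s c) (\<lambda>c. s2 * Q' s c)) / 2
         + (\<Sum>r<h. s2 * ee s r * Qv h Q (\<lambda>c. s2 * Q' s c) r)"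
      unfolding aQ_concat[OF s'] using G_aQ[OF Q] by simp
    also have "(\<Sum>r<h. s2 * ee s r * Qv h Q (\<lambda>c. s2 * Q' s c) r) = s2 * Qv h Q (\<lambda>c. s2 * Q' s c) s"
    proof -
      have "(\<Sum>r<h. s2 * ee s r * Qv h Q (\<lambda>c. s2 * Q' s c) r) = (\<Sum>r<h. if r = s then s2 * Qv h Q (\<lambda>c. s2 * Q' s c) r else 0)"
        unfolding ee_def by (intro sum.cong) auto
      then show ?thesis using s' by simp
    qed
    also have "s2 * Qv h Q (\<lambda>c. s2 * Q' s c) s = (\<Sum>c<h. Q s c * Q' s c) / 2"
    proof -
      have "Qv h Q (\<lambda>c. s2 * Q' s c) s = s2 * (\<Sum>c<h. Q s c * Q' s c)"
        unfolding Qv_def sum_distrib_left by (simp add: mult_ac)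
      then show ?thesis by (simp add: mult.assoc[symmetric] s2_sq)
    qed
    also have "dotp h (\<lambda>c. s2 * ee s c) (\<lambda>c. s2 * ee s c) = 1/2"
      unfolding dotp_s2 dotp_ee[OF s'] by (simp add: ee_def)
    also have "dotp h (\<lambda>c. s2 * Q' s c) (\<lambda>c. s2 * Q' s c) = 1/2"
      unfolding dotp_s2 dotp_rows using Q' s' unfolding rowO_def by simp
    finally show "(\<Sum>r<h. (dotp (2*h) (aQ h Q r) (aQ h Q' s))^2) = 1/2 + (\<Sum>c<h. Q s c * Q' s c) / 2"
      by simp
  qed
  also have "\<dots> = (real h + ip h Q Q') / 2"
    unfolding ip_def by (simp add: sum.distrib sum_divide_distrib add_divide_distrib)
  finally show ?thesis .
qed

definition gA :: "nat \<Rightarrow> nat \<Rightarrow> (nat \<Rightarrow> real) set \<Rightarrow> nat \<Rightarrow> nat \<Rightarrow> real" where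
  "gA m n S = (SOME a. \<exists>b. goodpair m n S a b)"
definition gB :: "nat \<Rightarrow> nat \<Rightarrow> (nat \<Rightarrow> real) set \<Rightarrow> nat \<Rightarrow> nat \<Rightarrow> real" where
  "gB m n S = (SOME b. goodpair m n S (gA m n S) b)"
definition Fv :: "nat \<Rightarrow> nat \<Rightarrow> (nat \<Rightarrow> real) set \<Rightarrow> (nat \<Rightarrow> real) set \<Rightarrow> real" where
  "Fv m n S T = FF m n (gA m n S) n (gA m n T)"

lemma gAB: "\<exists>a b. goodpair m n S a b \<Longrightarrow> goodpair m n S (gA m n S) (gB m n S)"
proof -
  assume "\<exists>a b. goodpair m n S a b"
  then have "\<exists>b. goodpair m n S (gA m n S) b" unfolding gA_def by (rule someI_ex)
  then show ?thesis unfolding gB_def by (rule someI_ex)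
qed

lemma Fv_eq: assumes "goodpair m n S a b" "goodpair m n T c d"
  shows "Fv m n S T = FF m n a n c"
proof -
  have 1: "goodpair m n S (gA m n S) (gB m n S)" using gAB assms(1) by blast
  have 2: "goodpair m n T (gA m n T) (gB m n T)" using gAB assms(2) by blast
  show ?thesis unfolding Fv_def
    using 1 2 assms unfolding goodpair_def by (metis FF_indep)
qed

lemma label_lemma:
  fixes L :: "'l set" and g :: "'l \<Rightarrow> (nat \<Rightarrow> real) set"
  assumes fin: "finite L" and n: "n > 0"
    and good: "\<And>l. l \<in> L \<Longrightarrow> goodpair m n (g l) (A l) (B l)"
    and vals: "\<And>l l'. l \<in> L \<Longrightarrow> l' \<in> L \<Longrightarrow> l \<noteq> l' \<Longrightarrow>
        FF m n (A l) n (A l') = 0 \<or> FF m n (A l) n (A l') = real n / 2"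
  shows "card (g ` L) = card L" "finite (g ` L)" "\<forall>S\<in>g ` L. \<exists>a b. goodpair m n S a b"
    "\<forall>S\<in>g ` L. \<forall>T\<in>g ` L. S \<noteq> T \<longrightarrow> Fv m n S T = 0 \<or> Fv m n S T = real n / 2"
proof -
  have "inj_on g L"
  proof (rule inj_onI, rule ccontr)
    fix l l' assume ll: "l \<in> L" "l' \<in> L" "g l = g l'" "l \<noteq> l'"
    have "FF m n (A l) n (A l') = FF m n (A l') n (A l')"
      using good[OF ll(1)] good[OF ll(2)] ll(3) unfolding goodpair_def by (metis FF_indep)
    also have "\<dots> = real n" using good[OF ll(2)] FF_self unfolding goodpair_def by blast
    finally show False using vals[OF ll(1,2,4)] n by auto
  qed
  then show "card (g ` L) = card L" by (rule card_image)
  show "finite (g ` L)" using fin by simp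
  show "\<forall>S\<in>g ` L. \<exists>a b. goodpair m n S a b" using good by blast
  show "\<forall>S\<in>g ` L. \<forall>T\<in>g ` L. S \<noteq> T \<longrightarrow> Fv m n S T = 0 \<or> Fv m n S T = real n / 2"
  proof (intro ballI impI)
    fix S T assume "S \<in> g ` L" "T \<in> g ` L" "S \<noteq> T"
    then obtain l l' where "l \<in> L" "l' \<in> L" "S = g l" "T = g l'" "l \<noteq> l'" by auto
    then show "Fv m n S T = 0 \<or> Fv m n S T = real n / 2"
      using Fv_eq[OF good good] vals by metis
  qed
qed

definition CInv :: "nat \<Rightarrow> bool" where
  "CInv i \<longleftrightarrow> finite (Cs i) \<and> card (Cs i) = 4^i + 2^i - 2
     \<and> (\<forall>S\<in>Cs i. \<exists>a b. goodpair (2^i) (2^(i-1)) S a b)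
     \<and> (\<forall>S\<in>Cs i. \<forall>T\<in>Cs i. S \<noteq> T \<longrightarrow> Fv (2^i) (2^(i-1)) S T = 0 \<or> Fv (2^i) (2^(i-1)) S T = real (2^(i-1)) / 2)"

lemma sum1: "(\<Sum>k<(1::nat). f k) = f 0" by simp

definition ln2 :: "real \<Rightarrow> real \<Rightarrow> nat \<Rightarrow> real" where
  "ln2 x y = (\<lambda>j. if j = 0 then x else if j = 1 then y else 0)"

lemma dotp_ln2: "dotp 2 (ln2 x y) (ln2 x' y') = x * x' + y * y'"
  unfolding dotp_def ln2_def sum2 by simp

lemma rowspace_row2: assumes r: "r \<noteq> 0"
  shows "rowspace 1 2 (row2 x y) = span_of 1 (\<lambda>_. ln2 (r * x) (r * y))"
proof
  show "rowspace 1 2 (row2 x y) \<subseteq> span_of 1 (\<lambda>_. ln2 (r * x) (r * y))"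
  proof
    fix v assume "v \<in> rowspace 1 2 (row2 x y)"
    then obtain c where v: "v = (\<lambda>j. if j < 2 then (\<Sum>k<(1::nat). c k * row2 x y k j) else 0)" unfolding rowspace_def by blast
    have "v = (\<lambda>j. (\<Sum>t<(1::nat). (\<lambda>_. c 0 / r) t * ln2 (r * x) (r * y) j))"
      unfolding v sum1 using r by (auto simp: fun_eq_iff row2_def ln2_def card_lessThan)
    then show "v \<in> span_of 1 (\<lambda>_. ln2 (r * x) (r * y))" unfolding span_of_def
      by (auto intro!: exI[of _ "\<lambda>_::nat. c 0 / r"])
  qed
  show "span_of 1 (\<lambda>_. ln2 (r * x) (r * y)) \<subseteq> rowspace 1 2 (row2 x y)"
  proof
    fix v assume "v \<in> span_of 1 (\<lambda>_. ln2 (r * x) (r * y))"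
    then obtain c where v: "v = (\<lambda>j. \<Sum>t<(1::nat). c t * ln2 (r * x) (r * y) j)" unfolding span_of_def by blast
    have "v = (\<lambda>j. if j < 2 then (\<Sum>k<(1::nat). (\<lambda>_. c 0 * r) k * row2 x y k j) else 0)"
      unfolding v sum1 by (auto simp: fun_eq_iff row2_def ln2_def)
    then show "v \<in> rowspace 1 2 (row2 x y)" unfolding rowspace_def
      by (auto intro!: exI[of _ "\<lambda>_::nat. c 0 * r"])
  qed
qed

lemma in_Rm_ln2: "in_Rm 2 (ln2 x y)" unfolding in_Rm_def ln2_def by simp

lemma goodpair_ln2: "x * x + y * y = 1 \<Longrightarrow> S = span_of 1 (\<lambda>_. ln2 x y) \<Longrightarrow>
   goodpair 2 1 S (\<lambda>_. ln2 x y) (\<lambda>_. ln2 (-y) x)"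
  unfolding goodpair_def ONF_def dotp_ln2 using in_Rm_ln2 by (simp add: algebra_simps)

lemma FF_ln2: "FF 2 1 (\<lambda>_. ln2 x y) 1 (\<lambda>_. ln2 x' y') = (x * x' + y * y')^2"
  unfolding FF_def dotp_ln2 by simp

lemma CInv_1: "CInv 1"
proof -
  define L where "L = {0, 1, 2, 3::nat}"
  define xs :: "real list" where "xs = [1, 0, s2, s2]"
  define ys :: "real list" where "ys = [0, 1, s2, -s2]"
  define g where "g l = span_of 1 (\<lambda>_. ln2 (xs ! l) (ys ! l))" for l
  have s2p: "s2 * s2 = 1/2" by (rule s2_sq)
  have s2z: "s2 \<noteq> 0" unfolding s2_def by simp
  have s2s: "1 / s2 * s2 = 1" using s2z by simp
  have C1: "Cs 1 = g ` L"
  proof -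
    have "rowspace 1 2 (row2 1 0) = g 0" unfolding g_def xs_def ys_def using rowspace_row2[of 1] by simp
    moreover have "rowspace 1 2 (row2 0 1) = g 1" unfolding g_def xs_def ys_def using rowspace_row2[of 1] by simp
    moreover have "rowspace 1 2 (row2 1 1) = g 2" unfolding g_def xs_def ys_def using rowspace_row2[of s2 1 1] s2z by simp
    moreover have "rowspace 1 2 (row2 1 (-1)) = g 3" unfolding g_def xs_def ys_def using rowspace_row2[of s2 1 "-1"] s2z by simp
    ultimately show ?thesis unfolding L_def by (simp add: numeral_eq_Suc)
  qed
  define Af where "Af l = (\<lambda>_::nat. ln2 (xs ! l) (ys ! l))" for l
  define Bf where "Bf l = (\<lambda>_::nat. ln2 (- (ys ! l)) (xs ! l))" for l
  have nrm: "xs ! l * xs ! l + ys ! l * ys ! l = 1" if "l \<in> L" for l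
    using that s2p unfolding L_def xs_def ys_def by auto
  have good: "goodpair 2 1 (g l) (Af l) (Bf l)" if "l \<in> L" for l
    unfolding g_def Af_def Bf_def by (rule goodpair_ln2[OF nrm[OF that] refl])
  have vals: "FF 2 1 (Af l) 1 (Af l') = 0 \<or> FF 2 1 (Af l) 1 (Af l') = real 1 / 2"
    if "l \<in> L" "l' \<in> L" "l \<noteq> l'" for l l'
    using that s2p unfolding Af_def FF_ln2 L_def xs_def ys_def by (auto simp: power2_eq_square)
  have LL: "finite L" "card L = 4" unfolding L_def by auto
  have n0: "(0::nat) < 1" by simp
  note R = label_lemma[OF LL(1) n0 good vals]
  have e: "(2::nat)^1 = 2" "(2::nat)^(1-1) = 1" "(4::nat)^1 = 4" by auto
  show ?thesis unfolding CInv_def C1 e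
  proof (intro conjI)
    show "finite (g ` L)" by (rule R(2))
    show "card (g ` L) = 4 + 2 - 2" using R(1) LL(2) by simp
    show "\<forall>S\<in>g ` L. \<exists>a b. goodpair 2 1 S a b" by (rule R(3))
    show "\<forall>S\<in>g ` L. \<forall>T\<in>g ` L. S \<noteq> T \<longrightarrow> Fv 2 1 S T = 0 \<or> Fv 2 1 S T = real 1 / 2" by (rule R(4))
  qed
qed

lemma dotp_pairfam:
  "dotp (2*h) (pairfam h n1 a1 a2 s) (pairfam h k1 b1 b2 t) =
    (if s < n1 then (if t < k1 then dotp h (a1 s) (b1 t) else 0)
     else (if t < k1 then 0 else dotp h (a2 (s - n1)) (b2 (t - k1))))"
  unfolding pairfam_def joinfam_def by (simp add: dotp_concat dotp_zero_left dotp_zero_right)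

lemma goodpair_pairI:
  assumes "ONF h n1 a1" "ONF h n2 a2" "ONF h k1 b1" "ONF h k2 b2"
    and c1: "\<And>s t. s < n1 \<Longrightarrow> t < k1 \<Longrightarrow> dotp h (a1 s) (b1 t) = 0"
    and c2: "\<And>s t. s < n2 \<Longrightarrow> t < k2 \<Longrightarrow> dotp h (a2 s) (b2 t) = 0"
    and N: "N = n1 + n2" "N = k1 + k2"
    and S: "S = {concat h x y | x y. x \<in> span_of n1 a1 \<and> y \<in> span_of n2 a2}"
  shows "goodpair (2*h) N S (pairfam h n1 a1 a2) (pairfam h k1 b1 b2)"
  unfolding goodpair_def
proof (intro conjI allI impI)
  show "ONF (2*h) N (pairfam h n1 a1 a2)" using ONF_pair assms by blast
  show "ONF (2*h) N (pairfam h k1 b1 b2)" using ONF_pair assms by blast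
  show "S = span_of N (pairfam h n1 a1 a2)" using S span_pair[OF N(1)] by simp
  fix s t assume "s < N" "t < N"
  then show "dotp (2*h) (pairfam h n1 a1 a2 s) (pairfam h k1 b1 b2 t) = 0"
    unfolding dotp_pairfam using c1 c2 N by auto
qed

type_synonym lab = "(bool + ((nat \<Rightarrow> real) set \<times> bool)) + (nat \<Rightarrow> nat \<Rightarrow> real)"

definition Lset :: "(nat \<Rightarrow> real) set set \<Rightarrow> (nat \<Rightarrow> nat \<Rightarrow> real) set \<Rightarrow> lab set" where
  "Lset C QQ = Inl ` (Inl ` UNIV \<union> Inr ` (C \<times> UNIV)) \<union> Inr ` QQ"

definition gS :: "nat \<Rightarrow> lab \<Rightarrow> (nat \<Rightarrow> real) set" where
  "gS p l = (case l of
     Inl (Inl b) \<Rightarrow> if b then {concat (2*p) (\<lambda>_. 0) x | x. in_Rm (2*p) x}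
                   else {concat (2*p) x (\<lambda>_. 0) | x. in_Rm (2*p) x}
   | Inl (Inr (P, b)) \<Rightarrow> if b then {concat (2*p) x y | x y. x \<in> P \<and> y \<in> perp (2*p) P}
                   else {concat (2*p) x y | x y. x \<in> P \<and> y \<in> P}
   | Inr Q \<Rightarrow> rowspace (2*p) (2*(2*p)) (IQ (2*p) Q))"

definition n1f :: "nat \<Rightarrow> lab \<Rightarrow> nat" where
  "n1f p l = (case l of Inl (Inl b) \<Rightarrow> if b then 0 else 2*p | Inl (Inr _) \<Rightarrow> p | Inr _ \<Rightarrow> 0)"
definition n2f :: "nat \<Rightarrow> lab \<Rightarrow> nat" where
  "n2f p l = (case l of Inl (Inl b) \<Rightarrow> if b then 2*p else 0 | Inl (Inr _) \<Rightarrow> p | Inr _ \<Rightarrow> 0)"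
definition c1f :: "nat \<Rightarrow> ((nat \<Rightarrow> real) set \<Rightarrow> nat \<Rightarrow> nat \<Rightarrow> real) \<Rightarrow> ((nat \<Rightarrow> real) set \<Rightarrow> nat \<Rightarrow> nat \<Rightarrow> real) \<Rightarrow> lab \<Rightarrow> nat \<Rightarrow> nat \<Rightarrow> real" where
  "c1f p aP bP l = (case l of Inl (Inl b) \<Rightarrow> if b then zf else ee | Inl (Inr (P, b)) \<Rightarrow> aP P | Inr _ \<Rightarrow> zf)"
definition c2f :: "nat \<Rightarrow> ((nat \<Rightarrow> real) set \<Rightarrow> nat \<Rightarrow> nat \<Rightarrow> real) \<Rightarrow> ((nat \<Rightarrow> real) set \<Rightarrow> nat \<Rightarrow> nat \<Rightarrow> real) \<Rightarrow> lab \<Rightarrow> nat \<Rightarrow> nat \<Rightarrow> real" where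
  "c2f p aP bP l = (case l of Inl (Inl b) \<Rightarrow> if b then ee else zf | Inl (Inr (P, b)) \<Rightarrow> if b then bP P else aP P | Inr _ \<Rightarrow> zf)"
definition d1f :: "nat \<Rightarrow> ((nat \<Rightarrow> real) set \<Rightarrow> nat \<Rightarrow> nat \<Rightarrow> real) \<Rightarrow> ((nat \<Rightarrow> real) set \<Rightarrow> nat \<Rightarrow> nat \<Rightarrow> real) \<Rightarrow> lab \<Rightarrow> nat \<Rightarrow> nat \<Rightarrow> real" where
  "d1f p aP bP l = (case l of Inl (Inl b) \<Rightarrow> if b then ee else zf | Inl (Inr (P, b)) \<Rightarrow> bP P | Inr _ \<Rightarrow> zf)"
definition d2f :: "nat \<Rightarrow> ((nat \<Rightarrow> real) set \<Rightarrow> nat \<Rightarrow> nat \<Rightarrow> real) \<Rightarrow> ((nat \<Rightarrow> real) set \<Rightarrow> nat \<Rightarrow> nat \<Rightarrow> real) \<Rightarrow> lab \<Rightarrow> nat \<Rightarrow> nat \<Rightarrow> real" where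
  "d2f p aP bP l = (case l of Inl (Inl b) \<Rightarrow> if b then zf else ee | Inl (Inr (P, b)) \<Rightarrow> if b then aP P else bP P | Inr _ \<Rightarrow> zf)"

definition gAf where
  "gAf p aP bP l = (case l of Inr Q \<Rightarrow> aQ (2*p) Q | Inl _ \<Rightarrow> pairfam (2*p) (n1f p l) (c1f p aP bP l) (c2f p aP bP l))"
definition gBf where
  "gBf p aP bP l = (case l of Inr Q \<Rightarrow> aQ (2*p) (negM Q) | Inl _ \<Rightarrow> pairfam (2*p) (n2f p l) (d1f p aP bP l) (d2f p aP bP l))"

lemma ONF_zf: "ONF h 0 zf" unfolding ONF_def by simp

lemma lab_cases:
  assumes "l \<in> Lset C QQ"
  obtains (E) b where "l = Inl (Inl b)"
    | (P) P b where "P \<in> C" "l = Inl (Inr (P, b))"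
    | (Q) Q where "Q \<in> QQ" "l = Inr Q"
  using assms unfolding Lset_def by auto

lemma lab_simps:
  "gS p (Inl (Inl False)) = {concat (2*p) x (\<lambda>_. 0) | x. in_Rm (2*p) x}"
  "gS p (Inl (Inl True)) = {concat (2*p) (\<lambda>_. 0) x | x. in_Rm (2*p) x}"
  "gS p (Inl (Inr (P, False))) = {concat (2*p) x y | x y. x \<in> P \<and> y \<in> P}"
  "gS p (Inl (Inr (P, True))) = {concat (2*p) x y | x y. x \<in> P \<and> y \<in> perp (2*p) P}"
  "gS p (Inr Q) = rowspace (2*p) (2*(2*p)) (IQ (2*p) Q)"
  "gAf p aP bP (Inl (Inl False)) = pairfam (2*p) (2*p) ee zf"
  "gAf p aP bP (Inl (Inl True)) = pairfam (2*p) 0 zf ee"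
  "gAf p aP bP (Inl (Inr (P, False))) = pairfam (2*p) p (aP P) (aP P)"
  "gAf p aP bP (Inl (Inr (P, True))) = pairfam (2*p) p (aP P) (bP P)"
  "gAf p aP bP (Inr Q) = aQ (2*p) Q"
  "gBf p aP bP (Inl (Inl False)) = pairfam (2*p) 0 zf ee"
  "gBf p aP bP (Inl (Inl True)) = pairfam (2*p) (2*p) ee zf"
  "gBf p aP bP (Inl (Inr (P, False))) = pairfam (2*p) p (bP P) (bP P)"
  "gBf p aP bP (Inl (Inr (P, True))) = pairfam (2*p) p (bP P) (aP P)"
  "gBf p aP bP (Inr Q) = aQ (2*p) (negM Q)"
  by (simp_all add: gS_def gAf_def gBf_def n1f_def n2f_def c1f_def c2f_def d1f_def d2f_def)

lemma step_good:
  assumes p: "p > 0"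
    and Cg: "\<And>P. P \<in> C \<Longrightarrow> goodpair (2*p) p P (aP P) (bP P)"
    and Qo: "\<And>Q. Q \<in> QQ \<Longrightarrow> rowO (2*p) Q \<and> colO (2*p) Q"
    and l: "l \<in> Lset C QQ"
  shows "goodpair (2*(2*p)) (2*p) (gS p l) (gAf p aP bP l) (gBf p aP bP l)"
  using l
proof (cases rule: lab_cases)
  case (E b)
  have sp: "{concat (2*p) x (\<lambda>_. 0) | x. in_Rm (2*p) x} = {concat (2*p) x y | x y. x \<in> span_of (2*p) ee \<and> y \<in> span_of 0 zf}"
    unfolding span_ee span0 by auto
  have sp2: "{concat (2*p) (\<lambda>_. 0) x | x. in_Rm (2*p) x} = {concat (2*p) x y | x y. x \<in> span_of 0 zf \<and> y \<in> span_of (2*p) ee}"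
    unfolding span_ee span0 by auto
  have 1: "goodpair (2*(2*p)) (2*p) (gS p (Inl (Inl True))) (gAf p aP bP (Inl (Inl True))) (gBf p aP bP (Inl (Inl True)))"
    unfolding lab_simps by (rule goodpair_pairI[OF ONF_zf ONF_ee ONF_ee ONF_zf _ _ _ _ sp2]) auto
  have 2: "goodpair (2*(2*p)) (2*p) (gS p (Inl (Inl False))) (gAf p aP bP (Inl (Inl False))) (gBf p aP bP (Inl (Inl False)))"
    unfolding lab_simps by (rule goodpair_pairI[OF ONF_ee ONF_zf ONF_zf ONF_ee _ _ _ _ sp]) auto
  show ?thesis using 1 2 E by (cases b) auto
next
  case (P P b)
  have g: "goodpair (2*p) p P (aP P) (bP P)" using Cg P(1) .
  then have a: "ONF (2*p) p (aP P)" and bb: "ONF (2*p) p (bP P)"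
    and ab: "\<And>s t. s < p \<Longrightarrow> t < p \<Longrightarrow> dotp (2*p) (aP P s) (bP P t) = 0"
    and PS: "P = span_of p (aP P)" unfolding goodpair_def by auto
  have ba: "\<And>s t. s < p \<Longrightarrow> t < p \<Longrightarrow> dotp (2*p) (bP P s) (aP P t) = 0" using ab dotp_comm by metis
  have perp: "perp (2*p) P = span_of p (bP P)" using complete_perp[OF g] by simp
  have 1: "goodpair (2*(2*p)) (2*p) (gS p (Inl (Inr (P, True)))) (gAf p aP bP (Inl (Inr (P, True)))) (gBf p aP bP (Inl (Inr (P, True))))"
    unfolding lab_simps by (rule goodpair_pairI[OF a bb bb a ab ba]) (use PS perp in auto)
  have 2: "goodpair (2*(2*p)) (2*p) (gS p (Inl (Inr (P, False)))) (gAf p aP bP (Inl (Inr (P, False)))) (gBf p aP bP (Inl (Inr (P, False))))"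
    unfolding lab_simps by (rule goodpair_pairI[OF a a bb bb ab ab]) (use PS in auto)
  show ?thesis using 1 2 P by (cases b) auto
next
  case (Q Q)
  have "rowO (2*p) Q" using Qo Q(1) by blast
  then show ?thesis unfolding Q lab_simps span_aQ by (rule goodpair_aQ)
qed

lemma n12: "n1f p (Inl x) + n2f p (Inl x) = 2*p"
  by (cases x) (auto simp: n1f_def n2f_def)

lemma pair_FF:
  "FF (2*(2*p)) (2*p) (gAf p aP bP (Inl x)) (2*p) (gAf p aP bP (Inl y)) =
     FF (2*p) (n1f p (Inl x)) (c1f p aP bP (Inl x)) (n1f p (Inl y)) (c1f p aP bP (Inl y))
   + FF (2*p) (n2f p (Inl x)) (c2f p aP bP (Inl x)) (n2f p (Inl y)) (c2f p aP bP (Inl y))"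
  unfolding gAf_def sum.case by (rule FF_pair[OF n12[symmetric] n12[symmetric]])

lemma pair_ONF:
  assumes Cg: "\<And>P. P \<in> C \<Longrightarrow> goodpair (2*p) p P (aP P) (bP P)"
    and l: "Inl x \<in> Lset C QQ"
  shows "ONF (2*p) (n1f p (Inl x)) (c1f p aP bP (Inl x))" "ONF (2*p) (n2f p (Inl x)) (c2f p aP bP (Inl x))"
proof -
  have "(\<exists>b. x = Inl b) \<or> (\<exists>P b. P \<in> C \<and> x = Inr (P, b))" using l unfolding Lset_def by auto
  then have "ONF (2*p) (n1f p (Inl x)) (c1f p aP bP (Inl x)) \<and> ONF (2*p) (n2f p (Inl x)) (c2f p aP bP (Inl x))"
  proof
    assume "\<exists>b. x = Inl b" then obtain b where "x = Inl b" by auto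
    then show ?thesis using ONF_ee ONF_zf by (cases b) (auto simp: n1f_def n2f_def c1f_def c2f_def)
  next
    assume "\<exists>P b. P \<in> C \<and> x = Inr (P, b)" then obtain P b where "P \<in> C" "x = Inr (P, b)" by auto
    then show ?thesis using Cg[of P] unfolding goodpair_def by (cases b) (auto simp: n1f_def n2f_def c1f_def c2f_def)
  qed
  then show "ONF (2*p) (n1f p (Inl x)) (c1f p aP bP (Inl x))" "ONF (2*p) (n2f p (Inl x)) (c2f p aP bP (Inl x))" by auto
qed

lemma step_vals:
  assumes p: "p > 0"
    and Cg: "\<And>P. P \<in> C \<Longrightarrow> goodpair (2*p) p P (aP P) (bP P)"
    and Qo: "\<And>Q. Q \<in> QQ \<Longrightarrow> rowO (2*p) Q \<and> colO (2*p) Q"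
    and Cv: "\<And>P P'. P \<in> C \<Longrightarrow> P' \<in> C \<Longrightarrow> P \<noteq> P' \<Longrightarrow>
        FF (2*p) p (aP P) p (aP P') = 0 \<or> FF (2*p) p (aP P) p (aP P') = real p / 2"
    and Qv: "\<And>Q Q'. Q \<in> QQ \<Longrightarrow> Q' \<in> QQ \<Longrightarrow> Q \<noteq> Q' \<Longrightarrow> ip (2*p) Q Q' = 0 \<or> ip (2*p) Q Q' = - real (2*p)"
    and l: "l \<in> Lset C QQ" and l': "l' \<in> Lset C QQ" and ll: "l \<noteq> l'"
  shows "FF (2*(2*p)) (2*p) (gAf p aP bP l) (2*p) (gAf p aP bP l') = 0 \<or>
         FF (2*(2*p)) (2*p) (gAf p aP bP l) (2*p) (gAf p aP bP l') = real (2*p) / 2"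
proof -
  have pp: "2 * p = p + p" by simp
  have tEA: "FF (2*p) (2*p) ee p (aP P) = real p" "FF (2*p) (2*p) ee p (bP P) = real p"
     "FF (2*p) p (aP P) (2*p) ee = real p" "FF (2*p) p (bP P) (2*p) ee = real p" if "P \<in> C" for P
    using Cg[OF that] FF_ee FF_sym unfolding goodpair_def by metis+
  have tEE: "FF (2*p) (2*p) ee (2*p) ee = real (2*p)" using FF_self[OF ONF_ee] .
  have tAB: "FF (2*p) p (aP P) p (bP P') = real p - FF (2*p) p (aP P) p (aP P')"
       "FF (2*p) p (bP P) p (aP P') = real p - FF (2*p) p (aP P) p (aP P')"
       "FF (2*p) p (bP P) p (bP P') = FF (2*p) p (aP P) p (aP P')"
    if "P \<in> C" "P' \<in> C" for P P'
  proof -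
    have g: "goodpair (2*p) p P (aP P) (bP P)" and g': "goodpair (2*p) p P' (aP P') (bP P')"
      using Cg that by auto
    have o: "ONF (2*p) p (aP P)" "ONF (2*p) p (bP P)" "ONF (2*p) p (aP P')" "ONF (2*p) p (bP P')"
      using g g' unfolding goodpair_def by auto
    have 1: "FF (2*p) p (aP P') p (aP P) + FF (2*p) p (bP P') p (aP P) = real p"
      using complete_FF[OF g' pp o(1)] .
    have 2: "FF (2*p) p (aP P) p (aP P') + FF (2*p) p (bP P) p (aP P') = real p"
      using complete_FF[OF g pp o(3)] .
    have 3: "FF (2*p) p (aP P) p (bP P') + FF (2*p) p (bP P) p (bP P') = real p"
      using complete_FF[OF g pp o(4)] .
    have s: "FF (2*p) p (aP P') p (aP P) = FF (2*p) p (aP P) p (aP P')"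
       "FF (2*p) p (bP P') p (aP P) = FF (2*p) p (aP P) p (bP P')" using FF_sym by metis+
    show "FF (2*p) p (aP P) p (bP P') = real p - FF (2*p) p (aP P) p (aP P')"
       "FF (2*p) p (bP P) p (aP P') = real p - FF (2*p) p (aP P) p (aP P')"
       "FF (2*p) p (bP P) p (bP P') = FF (2*p) p (aP P) p (aP P')"
      using 1 2 3 s by linarith+
  qed
  have tAA: "FF (2*p) p (aP P) p (aP P) = real p" if "P \<in> C" for P
    using Cg[OF that] FF_self unfolding goodpair_def by blast
  have z: "FF m 0 a k b = 0" "FF m n a 0 b = 0" for m n k a b using FF_zero_left FF_zero_right by auto
  show ?thesis
  proof (cases l)
    case (Inr Q)
    then have Q: "Q \<in> QQ" using l unfolding Lset_def by auto
    show ?thesis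
    proof (cases l')
      case (Inr Q')
      then have Q': "Q' \<in> QQ" "Q \<noteq> Q'" using l' ll \<open>l = Inr Q\<close> unfolding Lset_def by auto
      have "FF (2*(2*p)) (2*p) (aQ (2*p) Q) (2*p) (aQ (2*p) Q') = (real (2*p) + ip (2*p) Q Q') / 2"
        using FF_aQ_aQ Qo[OF Q] Qo[OF Q'(1)] by blast
      then show ?thesis unfolding \<open>l = Inr Q\<close> Inr lab_simps using Qv[OF Q Q'] by auto
    next
      case (Inl y)
      have "FF (2*(2*p)) (2*p) (aQ (2*p) Q) (2*p) (gAf p aP bP (Inl y)) = real (2*p) / 2"
        unfolding gAf_def using FF_aQ_pair[OF _ pair_ONF[OF Cg l'[unfolded Inl]] n12[symmetric]] Qo[OF Q]
        by simp
      then show ?thesis unfolding \<open>l = Inr Q\<close> Inl lab_simps by simp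
    qed
  next
    case (Inl x)
    show ?thesis
    proof (cases l')
      case (Inr Q')
      then have Q': "Q' \<in> QQ" using l' unfolding Lset_def by auto
      have "FF (2*(2*p)) (2*p) (aQ (2*p) Q') (2*p) (gAf p aP bP (Inl x)) = real (2*p) / 2"
        unfolding gAf_def using FF_aQ_pair[OF _ pair_ONF[OF Cg l[unfolded Inl]] n12[symmetric]] Qo[OF Q']
        by simp
      then show ?thesis unfolding Inl Inr lab_simps using FF_sym by metis
    next
      case (Inl y)
      have xs: "(\<exists>b. x = Inl b) \<or> (\<exists>P b. P \<in> C \<and> x = Inr (P, b))" using l \<open>l = Inl x\<close> unfolding Lset_def by auto
      have ys: "(\<exists>b. y = Inl b) \<or> (\<exists>P b. P \<in> C \<and> y = Inr (P, b))" using l' Inl unfolding Lset_def by auto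
      have xy: "x \<noteq> y" using ll \<open>l = Inl x\<close> Inl by auto
      let ?R = "FF (2*p) (n1f p (Inl x)) (c1f p aP bP (Inl x)) (n1f p (Inl y)) (c1f p aP bP (Inl y))
   + FF (2*p) (n2f p (Inl x)) (c2f p aP bP (Inl x)) (n2f p (Inl y)) (c2f p aP bP (Inl y))"
      have "?R = 0 \<or> ?R = real (2*p) / 2"
        using xs ys xy p
      proof (elim disjE exE conjE)
        fix b b' assume "x = Inl b" "y = Inl b'" "x \<noteq> y"
        then show ?thesis by (cases b; cases b') (auto simp: n1f_def n2f_def c1f_def c2f_def z tEE)
      next
        fix b P b' assume "x = Inl b" "P \<in> C" "y = Inr (P, b')"
        then show ?thesis by (cases b; cases b') (auto simp: n1f_def n2f_def c1f_def c2f_def z tEA)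
      next
        fix b P b' assume "y = Inl b" "P \<in> C" "x = Inr (P, b')"
        then show ?thesis by (cases b; cases b') (auto simp: n1f_def n2f_def c1f_def c2f_def z tEA)
      next
        fix P b P' b' assume H: "P \<in> C" "x = Inr (P, b)" "P' \<in> C" "y = Inr (P', b')" "x \<noteq> y"
        show ?thesis
        proof (cases "b = b'")
          case True
          then have "P \<noteq> P'" using H by auto
          then have cv: "FF (2*p) p (aP P) p (aP P') = 0 \<or> FF (2*p) p (aP P) p (aP P') = real p / 2"
            using Cv H by blast
          show ?thesis using True H cv tAB[OF H(1,3)]
            by (cases b) (auto simp: n1f_def n2f_def c1f_def c2f_def)
        next
          case False
          then show ?thesis using H tAB[OF H(1,3)]
            by (cases b; cases b') (auto simp: n1f_def n2f_def c1f_def c2f_def)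
        qed
      qed
      then show ?thesis unfolding \<open>l = Inl x\<close> Inl pair_FF .
    qed
  qed
qed

lemma Cs_step_eq:
  "Cs (Suc (Suc k)) = gS (2^k) ` Lset (Cs (Suc k)) (Qs (Suc (Suc k)))"
proof -
  define p :: nat where "p = 2^k"
  have e: "(2::nat)^(Suc k) = 2*p" "(2::nat)^(Suc (Suc k)) = 2*(2*p)" unfolding p_def by simp_all
  have "Cs (Suc (Suc k)) =
     {{concat (2*p) x (\<lambda>_. 0) | x. in_Rm (2*p) x},
      {concat (2*p) (\<lambda>_. 0) x | x. in_Rm (2*p) x}}
     \<union> (\<Union>P\<in>Cs (Suc k). {{concat (2*p) x y | x y. x \<in> P \<and> y \<in> P},
                          {concat (2*p) x y | x y. x \<in> P \<and> y \<in> perp (2*p) P}})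
     \<union> (\<lambda>Q. rowspace (2*p) (2*(2*p)) (IQ (2*p) Q)) ` Qs (Suc (Suc k))"
    by (simp only: Cs.simps e)
  also have "\<dots> = gS p ` Lset (Cs (Suc k)) (Qs (Suc (Suc k)))"
  proof -
    have 1: "gS p ` (Inl ` Inl ` UNIV) = {{concat (2*p) x (\<lambda>_. 0) | x. in_Rm (2*p) x},
      {concat (2*p) (\<lambda>_. 0) x | x. in_Rm (2*p) x}}"
      unfolding UNIV_bool by (simp add: lab_simps)
    have 2: "gS p ` (Inl ` Inr ` (Cs (Suc k) \<times> UNIV)) = (\<Union>P\<in>Cs (Suc k). {{concat (2*p) x y | x y. x \<in> P \<and> y \<in> P},
                          {concat (2*p) x y | x y. x \<in> P \<and> y \<in> perp (2*p) P}})"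
    proof
      show "gS p ` (Inl ` Inr ` (Cs (Suc k) \<times> UNIV)) \<subseteq> (\<Union>P\<in>Cs (Suc k). {{concat (2*p) x y | x y. x \<in> P \<and> y \<in> P},
                          {concat (2*p) x y | x y. x \<in> P \<and> y \<in> perp (2*p) P}})"
      proof
        fix S assume "S \<in> gS p ` (Inl ` Inr ` (Cs (Suc k) \<times> UNIV))"
        then obtain P b where "P \<in> Cs (Suc k)" "S = gS p (Inl (Inr (P, b)))" by auto
        then show "S \<in> (\<Union>P\<in>Cs (Suc k). {{concat (2*p) x y | x y. x \<in> P \<and> y \<in> P},
                          {concat (2*p) x y | x y. x \<in> P \<and> y \<in> perp (2*p) P}})"
          using lab_simps(3,4) by (cases b) auto
      qed
      show "(\<Union>P\<in>Cs (Suc k). {{concat (2*p) x y | x y. x \<in> P \<and> y \<in> P},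
                          {concat (2*p) x y | x y. x \<in> P \<and> y \<in> perp (2*p) P}}) \<subseteq> gS p ` (Inl ` Inr ` (Cs (Suc k) \<times> UNIV))"
      proof
        fix S assume "S \<in> (\<Union>P\<in>Cs (Suc k). {{concat (2*p) x y | x y. x \<in> P \<and> y \<in> P},
                          {concat (2*p) x y | x y. x \<in> P \<and> y \<in> perp (2*p) P}})"
        then obtain P where P: "P \<in> Cs (Suc k)" and "S = {concat (2*p) x y | x y. x \<in> P \<and> y \<in> P} \<or>
            S = {concat (2*p) x y | x y. x \<in> P \<and> y \<in> perp (2*p) P}" by auto
        then have "S = gS p (Inl (Inr (P, False))) \<or> S = gS p (Inl (Inr (P, True)))" using lab_simps(3,4) by auto
        then show "S \<in> gS p ` (Inl ` Inr ` (Cs (Suc k) \<times> UNIV))" using P by blast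
      qed
    qed
    have 3: "gS p ` (Inr ` Qs (Suc (Suc k))) = (\<lambda>Q. rowspace (2*p) (2*(2*p)) (IQ (2*p) Q)) ` Qs (Suc (Suc k))"
      by (simp add: image_image lab_simps)
    show ?thesis by (simp only: Lset_def image_Un 1 2 3)
  qed
  finally show ?thesis unfolding p_def .
qed

lemma card_Lset: "finite C \<Longrightarrow> finite QQ \<Longrightarrow> finite (Lset C QQ) \<and> card (Lset C QQ) = 2 + 2 * card C + card QQ"
proof -
  assume C: "finite C" and QQ: "finite QQ"
  have fA: "finite (Inl ` UNIV \<union> Inr ` (C \<times> (UNIV :: bool set)) :: (bool + ((nat \<Rightarrow> real) set \<times> bool)) set)"
    using C by simp
  have cA: "card (Inl ` UNIV \<union> Inr ` (C \<times> (UNIV :: bool set)) :: (bool + ((nat \<Rightarrow> real) set \<times> bool)) set) = 2 + 2 * card C"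
    using C by (subst card_Un_disjoint) (auto simp: card_image card_cartesian_product)
  have "card (Lset C QQ) = card (Inl ` (Inl ` UNIV \<union> Inr ` (C \<times> UNIV)) :: lab set) + card (Inr ` QQ :: lab set)"
    unfolding Lset_def using fA QQ by (subst card_Un_disjoint) auto
  also have "\<dots> = 2 + 2 * card C + card QQ" using cA by (simp add: card_image)
  finally show ?thesis unfolding Lset_def using fA QQ by simp
qed

lemma CInv_step: assumes C: "CInv (Suc k)" and Q: "QInv (Suc (Suc k))" shows "CInv (Suc (Suc k))"
proof -
  define p :: nat where "p = 2^k"
  have p0: "p > 0" unfolding p_def by simp
  have e1: "(2::nat)^(Suc k) = 2*p" "(2::nat)^(Suc k - 1) = p" "(2::nat)^(Suc (Suc k) - 1) = 2*p"
     "(2::nat)^(Suc (Suc k)) = 2*(2*p)" unfolding p_def by simp_all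
  have Cf: "finite (Cs (Suc k))" and Cc: "card (Cs (Suc k)) = 4^(Suc k) + 2^(Suc k) - 2"
    and Cg0: "\<And>S. S \<in> Cs (Suc k) \<Longrightarrow> \<exists>a b. goodpair (2*p) p S a b"
    and Cv0: "\<And>S T. S \<in> Cs (Suc k) \<Longrightarrow> T \<in> Cs (Suc k) \<Longrightarrow> S \<noteq> T \<Longrightarrow> Fv (2*p) p S T = 0 \<or> Fv (2*p) p S T = real p / 2"
    using C unfolding CInv_def e1 by auto
  have Qf: "finite (Qs (Suc (Suc k)))" and Qc: "card (Qs (Suc (Suc k))) = 2 * 4^(Suc k)"
    and Qo: "\<And>Q. Q \<in> Qs (Suc (Suc k)) \<Longrightarrow> rowO (2*p) Q \<and> colO (2*p) Q"
    and Qv: "\<And>Q Q'. Q \<in> Qs (Suc (Suc k)) \<Longrightarrow> Q' \<in> Qs (Suc (Suc k)) \<Longrightarrow> Q \<noteq> Q' \<Longrightarrow> ip (2*p) Q Q' = 0 \<or> ip (2*p) Q Q' = - real (2*p)"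
    using Q unfolding QInv_def e1 by auto
  define aP where "aP P = gA (2*p) p P" for P
  define bP where "bP P = gB (2*p) p P" for P
  have Cg: "goodpair (2*p) p P (aP P) (bP P)" if "P \<in> Cs (Suc k)" for P
    unfolding aP_def bP_def using gAB Cg0[OF that] by blast
  have Cv: "FF (2*p) p (aP P) p (aP P') = 0 \<or> FF (2*p) p (aP P) p (aP P') = real p / 2"
    if "P \<in> Cs (Suc k)" "P' \<in> Cs (Suc k)" "P \<noteq> P'" for P P'
    using Cv0[OF that] unfolding Fv_def aP_def .
  define L where "L = Lset (Cs (Suc k)) (Qs (Suc (Suc k)))"
  have LL: "finite L" "card L = 2 + 2 * card (Cs (Suc k)) + card (Qs (Suc (Suc k)))"
    using card_Lset[OF Cf Qf] unfolding L_def by auto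
  have n0: "2*p > 0" using p0 by simp
  have good: "goodpair (2*(2*p)) (2*p) (gS p l) (gAf p aP bP l) (gBf p aP bP l)" if "l \<in> L" for l
    using step_good[OF p0 Cg Qo that[unfolded L_def]] by blast
  have vals: "FF (2*(2*p)) (2*p) (gAf p aP bP l) (2*p) (gAf p aP bP l') = 0 \<or>
         FF (2*(2*p)) (2*p) (gAf p aP bP l) (2*p) (gAf p aP bP l') = real (2*p) / 2"
    if "l \<in> L" "l' \<in> L" "l \<noteq> l'" for l l'
    using step_vals[OF p0 Cg Qo Cv Qv that[unfolded L_def]] by blast
  note R = label_lemma[OF LL(1) n0 good vals]
  have CS: "Cs (Suc (Suc k)) = gS p ` L" unfolding L_def p_def by (rule Cs_step_eq)
  have cardeq: "card L = 4^(Suc (Suc k)) + 2^(Suc (Suc k)) - 2"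
  proof -
    have "(1::nat) \<le> 2^k" by simp
    then have "(4::nat)^(Suc k) + 2^(Suc k) \<ge> 2" by (simp only: power_Suc)
    then show ?thesis unfolding LL(2) Cc Qc by simp
  qed
  show ?thesis unfolding CInv_def CS e1
  proof (intro conjI)
    show "finite (gS p ` L)" by (rule R(2))
    show "card (gS p ` L) = 4^(Suc (Suc k)) + 2 * (2 * p) - 2" using R(1) cardeq e1 by simp
    show "\<forall>S\<in>gS p ` L. \<exists>a b. goodpair (2 * (2 * p)) (2 * p) S a b" by (rule R(3))
    show "\<forall>S\<in>gS p ` L. \<forall>T\<in>gS p ` L. S \<noteq> T \<longrightarrow> Fv (2 * (2 * p)) (2 * p) S T = 0 \<or> Fv (2 * (2 * p)) (2 * p) S T = real (2 * p) / 2"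
      by (rule R(4))
  qed
qed

lemma CInv_all: "i \<ge> 1 \<Longrightarrow> CInv i"
proof (induction i rule: nat_induct_at_least)
  case base then show ?case using CInv_1 by simp
next
  case (Suc i)
  then obtain k where "i = Suc k" by (cases i) auto
  then show ?case using CInv_step QInv_all Suc by simp
qed

lemma pow4: "(4::nat)^i = 2^i * 2^i"
proof -
  have "(4::nat)^i = (2*2)^i" by simp
  also have "\<dots> = 2^i * 2^i" by (rule power_mult_distrib)
  finally show ?thesis .
qed

theorem mainTheorem1:
  fixes i :: nat
  assumes "i \<ge> 1"
  defines "m \<equiv> (2::nat) ^ i"
  shows "card (Cs i) = (m - 1) * (m + 2)
       \<and> card (Cs i) = 2^(2*i) + 2^i - 2
       \<and> (\<forall>S\<in>Cs i. has_dim m S (m div 2))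
       \<and> (\<forall>S\<in>Cs i. \<forall>T\<in>Cs i. S \<noteq> T \<longrightarrow>
            subspace_dist m (m div 2) S T = sqrt (real m / 4)
          \<or> subspace_dist m (m div 2) S T = sqrt (real m / 2))"
proof -
  have CI: "CInv i" using CInv_all assms(1) by blast
  define n where "n = (2::nat)^(i-1)"
  have mn: "m = 2 * n" unfolding m_def n_def using assms(1) by (simp add: power_eq_if)
  have md: "m div 2 = n" using mn by simp
  have n0: "n \<ge> 1" unfolding n_def by simp
  have cC: "card (Cs i) = 4^i + 2^i - 2" and gd: "\<And>S. S \<in> Cs i \<Longrightarrow> \<exists>a b. goodpair m n S a b"
    and fv: "\<And>S T. S \<in> Cs i \<Longrightarrow> T \<in> Cs i \<Longrightarrow> S \<noteq> T \<Longrightarrow> Fv m n S T = 0 \<or> Fv m n S T = real n / 2"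
    using CI unfolding CInv_def m_def n_def by auto
  have p4: "(4::nat)^i = m * m" unfolding m_def by (rule pow4)
  have p4': "(2::nat)^(2*i) = m * m" unfolding m_def by (simp only: mult_2 power_add)
  have c1: "card (Cs i) = (m - 1) * (m + 2)"
  proof -
    have "m \<ge> 1" using mn n0 by simp
    define q where "q = m - 1"
    have q: "m = q + 1" using \<open>m \<ge> 1\<close> unfolding q_def by simp
    show ?thesis unfolding cC p4 using q by (simp add: m_def[symmetric] algebra_simps)
  qed
  have c2: "card (Cs i) = 2^(2*i) + 2^i - 2" unfolding cC p4 p4' ..
  have hd: "\<forall>S\<in>Cs i. has_dim m S (m div 2)"
    using gd unfolding md goodpair_def by (metis ONF_has_dim)
  have dd: "\<forall>S\<in>Cs i. \<forall>T\<in>Cs i. S \<noteq> T \<longrightarrow>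
            subspace_dist m (m div 2) S T = sqrt (real m / 4)
          \<or> subspace_dist m (m div 2) S T = sqrt (real m / 2)"
  proof (intro ballI impI)
    fix S T assume ST: "S \<in> Cs i" "T \<in> Cs i" "S \<noteq> T"
    obtain a b where ab: "goodpair m n S a b" using gd ST(1) by blast
    obtain c d where cd: "goodpair m n T c d" using gd ST(2) by blast
    have sd: "subspace_dist m n S T = sqrt (real n - FF m n a n c)"
      using dist_formula ab cd unfolding goodpair_def by blast
    have "FF m n a n c = 0 \<or> FF m n a n c = real n / 2" using fv[OF ST] Fv_eq[OF ab cd] by simp
    moreover have "real m = 2 * real n" using mn by simp
    ultimately show "subspace_dist m (m div 2) S T = sqrt (real m / 4)
          \<or> subspace_dist m (m div 2) S T = sqrt (real m / 2)"
      unfolding md sd by auto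
  qed
  show ?thesis using c1 c2 hd dd by blast
qed

end
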